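(* Assume $\lambda_0<\varepsilon-\eta\le0<A-\delta$ and $\rho>(A-\delta)(1-\gamma)$, and let $q\in I$. Let $(X^*,c^* )$ be the closed-loop solution from $q$ for the feedback $\varphi(x)=x_1(0)+\alpha G(x)$. Then $c^*$ is optimal, $V_0(q)=v(q)=\nu G(q)^{1-\gamma}=J_0(q;c^* )$, and $c^*$ is the unique (up to a.e. equality) optimal control from $q$.
   Context: Parameters $A,\delta,\rho,\varepsilon,\eta,\tau>0$, $\gamma>0$, $\gamma\ne1$; $\lambda_0$ is the unique real root of $1=\varepsilon\int_{-\tau}^0e^{(\lambda+\eta)u}du$. $M^2=\mathbb{R}\times L^2([-\tau,0];\mathbb{R})$, $\langle x,y\rangle=x_0y_0+\int_{-\tau}^0x_1y_1$. $\kappa=\big(1-\varepsilon\int_{-\tau}^0e^{(A-\delta+\eta)s}ds,\ s\mapsto -e^{(A-\delta)s}\big)$, $G(x)=\langle x,\kappa\rangle$, $\mathcal X=\{G>0\}$, $\alpha=\frac{\rho-(A-\delta)(1-\gamma)}{\gamma}$, $\nu=\frac1{1-\gamma}\alpha^{-\gamma}$. For $q=(x_0,x_1)\in M^2$ and a control $c\in L^1_{loc}([0,\infty);\mathbb{R})$ the state is $X_0(t)=e^{(A-\delta)t}x_0-\int_0^te^{(A-\delta)(t-u)}c(u)du$, $X_1(t)[s]=x_1(s-t)\mathbf 1_{\{s-t\ge-\tau\}}+\varepsilon\int_{\max(0,t-s-\tau)}^{t}c(u)e^{\eta(u-t+s)}du$, $s\in[-\tau,0]$. Admissible controls: $\mathcal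 C_{ad}(q)=\{c: X_0(t)\ge0,\ c(t)\ge0,\ c(t)\ge X_1(t)[0]\ \forall t\}$. Objective $J_0(q;c)=\int_0^\infty\frac{(c(t)-X_1(t)[0])^{1-\gamma}}{1-\gamma}e^{-\rho t}dt$ (integrand $-\infty$ where $c=X_1[0]$ and $\gamma>1$), value $V_0(q)=\sup_{c\in\mathcal C_{ad}(q)}J_0(q;c)$ ($-\infty$ if empty). A closed-loop solution for $\varphi(x)=x_1(0)+\alpha G(x)$ is a pair $(X,c)$ with $c(t)=X_1(t)[0]+\alpha G(X(t))$ a.e. $I=\{x\in\mathcal X: x_1\in W^{1,2}([-\tau,0]),\ x_1(-\tau)=0,\ x_1(s)>0\ \forall s\in(-\tau,0]\}$. *)

theory Defs
  imports "HOL-Analysis.Analysis"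
begin

text \<open>Elements of M^2 = R x L^2([-tau,0]) are represented as pairs (x0, x1) with
  x1 :: real => real (only its values on [-tau,0] matter).\<close>

definition lambda0 :: "real \<Rightarrow> real \<Rightarrow> real \<Rightarrow> real" where
  "lambda0 eps eta tau =
     (THE l. 1 = eps * (LINT u:{-tau..0}|lborel. exp ((l + eta) * u)))"

definition kappa0 :: "real \<Rightarrow> real \<Rightarrow> real \<Rightarrow> real \<Rightarrow> real \<Rightarrow> real" where
  "kappa0 A delta eps eta tau = 1 - eps * (LINT s:{-tau..0}|lborel. exp ((A - delta + eta) * s))"

definition kappa1 :: "real \<Rightarrow> real \<Rightarrow> real \<Rightarrow> real" where
  "kappa1 A delta s = - exp ((A - delta) * s)"

definition Gfun :: "real \<Rightarrow> real \<Rightarrow> real \<Rightarrow> real \<Rightarrow> real \<Rightarrow> real \<times> (real \<Rightarrow> real) \<Rightarrow> real" where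
  "Gfun A delta eps eta tau x =
     fst x * kappa0 A delta eps eta tau + (LINT s:{-tau..0}|lborel. snd x s * kappa1 A delta s)"

definition alpha :: "real \<Rightarrow> real \<Rightarrow> real \<Rightarrow> real \<Rightarrow> real" where
  "alpha A delta rho gam = (rho - (A - delta) * (1 - gam)) / gam"

definition nu :: "real \<Rightarrow> real \<Rightarrow> real \<Rightarrow> real \<Rightarrow> real" where
  "nu A delta rho gam = 1 / (1 - gam) * (alpha A delta rho gam) powr (- gam)"

definition stX0 :: "real \<Rightarrow> real \<Rightarrow> real \<Rightarrow> (real \<Rightarrow> real) \<Rightarrow> real \<Rightarrow> real" where
  "stX0 A delta x0 c t =
     exp ((A - delta) * t) * x0 - (LINT u:{0..t}|lborel. exp ((A - delta) * (t - u)) * c u)"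

definition stX1 :: "real \<Rightarrow> real \<Rightarrow> real \<Rightarrow> (real \<Rightarrow> real) \<Rightarrow> (real \<Rightarrow> real) \<Rightarrow> real \<Rightarrow> real \<Rightarrow> real" where
  "stX1 eps eta tau x1 c t = (\<lambda>s.
     (if s - t \<ge> - tau then x1 (s - t) else 0)
     + eps * (LINT u:{max 0 (t - s - tau)..t}|lborel. c u * exp (eta * (u - t + s))))"

definition state :: "real \<Rightarrow> real \<Rightarrow> real \<Rightarrow> real \<Rightarrow> real \<Rightarrow> real \<times> (real \<Rightarrow> real)
    \<Rightarrow> (real \<Rightarrow> real) \<Rightarrow> real \<Rightarrow> real \<times> (real \<Rightarrow> real)" where
  "state A delta eps eta tau q c t = (stX0 A delta (fst q) c t, stX1 eps eta tau (snd q) c t)"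

definition L1loc :: "(real \<Rightarrow> real) \<Rightarrow> bool" where
  "L1loc c \<longleftrightarrow> (\<forall>T\<ge>0. set_integrable lborel {0..T} c)"

text \<open>Admissible controls (constraints on c understood a.e., as c is an L^1_loc class).\<close>
definition Cad :: "real \<Rightarrow> real \<Rightarrow> real \<Rightarrow> real \<Rightarrow> real \<Rightarrow> real \<times> (real \<Rightarrow> real)
    \<Rightarrow> (real \<Rightarrow> real) set" where
  "Cad A delta eps eta tau q = {c. L1loc c
     \<and> (\<forall>t\<ge>0. stX0 A delta (fst q) c t \<ge> 0)
     \<and> (AE t in lborel. t \<ge> 0 \<longrightarrow> c t \<ge> 0 \<and> c t \<ge> stX1 eps eta tau (snd q) c t 0)}"

text \<open>Objective: for gam < 1 the integrand is nonnegative, for gam > 1 nonpositive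
  (equal to -infinity where c = X1[0]); the integral is taken in the extended reals.\<close>
definition J0 :: "real \<Rightarrow> real \<Rightarrow> real \<Rightarrow> real \<Rightarrow> real \<Rightarrow> real \<Rightarrow> real \<Rightarrow> real \<times> (real \<Rightarrow> real)
    \<Rightarrow> (real \<Rightarrow> real) \<Rightarrow> ereal" where
  "J0 A delta rho eps eta tau gam q c =
     (let d = (\<lambda>t. max 0 (c t - stX1 eps eta tau (snd q) c t 0)) in
      if gam < 1 then
        enn2ereal (\<integral>\<^sup>+ t. indicator {0..} t *
           ennreal (d t powr (1 - gam) / (1 - gam) * exp (- rho * t)) \<partial>lborel)
      else
        - enn2ereal (\<integral>\<^sup>+ t. indicator {0..} t *
           (if d t = 0 then \<infinity> else ennreal (d t powr (1 - gam) / (gam - 1) * exp (- rho * t))) \<partial>lborel))"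

definition V0 :: "real \<Rightarrow> real \<Rightarrow> real \<Rightarrow> real \<Rightarrow> real \<Rightarrow> real \<Rightarrow> real \<Rightarrow> real \<times> (real \<Rightarrow> real) \<Rightarrow> ereal" where
  "V0 A delta rho eps eta tau gam q =
     Sup (J0 A delta rho eps eta tau gam q ` Cad A delta eps eta tau q)"

definition W12 :: "real \<Rightarrow> (real \<Rightarrow> real) \<Rightarrow> bool" where
  "W12 tau x1 \<longleftrightarrow> (\<exists>g. g \<in> borel_measurable lborel
     \<and> set_integrable lborel {-tau..0} g
     \<and> set_integrable lborel {-tau..0} (\<lambda>s. (g s)\<^sup>2)
     \<and> (\<forall>s\<in>{-tau..0}. x1 s = x1 (-tau) + (LINT u:{-tau..s}|lborel. g u)))"

definition Iset :: "real \<Rightarrow> real \<Rightarrow> real \<Rightarrow> real \<Rightarrow> real \<Rightarrow> (real \<times> (real \<Rightarrow> real)) set" where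
  "Iset A delta eps eta tau = {x. Gfun A delta eps eta tau x > 0 \<and> W12 tau (snd x)
     \<and> snd x (-tau) = 0 \<and> (\<forall>s\<in>{-tau<..0}. snd x s > 0)}"

definition closed_loop :: "real \<Rightarrow> real \<Rightarrow> real \<Rightarrow> real \<Rightarrow> real \<Rightarrow> real \<Rightarrow> real \<Rightarrow> real \<times> (real \<Rightarrow> real)
    \<Rightarrow> (real \<Rightarrow> real \<times> (real \<Rightarrow> real)) \<Rightarrow> (real \<Rightarrow> real) \<Rightarrow> bool" where
  "closed_loop A delta rho eps eta tau gam q X c \<longleftrightarrow> L1loc c
     \<and> (\<forall>t\<ge>0. X t = state A delta eps eta tau q c t)
     \<and> (AE t in lborel. t \<ge> 0 \<longrightarrow>
          c t = snd (X t) 0 + alpha A delta rho gam * Gfun A delta eps eta tau (X t))"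

end

theory Submission
  imports Defs
begin

lemma fubini_kernel:
  fixes f :: "real \<Rightarrow> real" and k :: "real \<Rightarrow> real \<Rightarrow> real"
  assumes f: "integrable lborel f"
    and km: "(\<lambda>p. k (fst p) (snd p)) \<in> borel_measurable (lborel \<Otimes>\<^sub>M lborel)"
    and bd: "\<And>x y. \<bar>k x y\<bar> \<le> B * indicator {a0..b0} x"
  shows "(\<integral>x. (\<integral>y. f y * k x y \<partial>lborel) \<partial>lborel) = (\<integral>y. f y * (\<integral>x. k x y \<partial>lborel) \<partial>lborel)"
    and "integrable lborel (\<lambda>x. \<integral>y. f y * k x y \<partial>lborel)"
    and "integrable lborel (\<lambda>y. f y * (\<integral>x. k x y \<partial>lborel))"
proof -
  have fm[measurable]: "f \<in> borel_measurable lborel" using f by auto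
  have km'[measurable]: "(\<lambda>p. k (fst p) (snd p)) \<in> borel_measurable (lborel \<Otimes>\<^sub>M lborel)" by (rule km)
  have kx[measurable]: "k x \<in> borel_measurable lborel" for x
    using measurable_compose[OF measurable_Pair1'[of x lborel lborel] km] by simp
  have ky[measurable]: "(\<lambda>x. k x y) \<in> borel_measurable lborel" for y
    using measurable_compose[OF measurable_Pair2'[of y lborel lborel] km] by simp
  have B0: "B \<ge> 0 \<or> {a0..b0} = {}" using bd[of a0 0] by (cases "a0 \<le> b0") (auto simp: indicator_def)
  have Fm[measurable]: "(\<lambda>p. f (snd p) * k (fst p) (snd p)) \<in> borel_measurable (lborel \<Otimes>\<^sub>M lborel)"
    by measurable
  have int2: "integrable lborel (\<lambda>y. f y * k x y)" for x
  proof (rule Bochner_Integration.integrable_bound[where f="\<lambda>y. \<bar>B\<bar> * \<bar>f y\<bar>"])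
    show "integrable lborel (\<lambda>y. \<bar>B\<bar> * \<bar>f y\<bar>)" using f by auto
    show "AE y in lborel. norm (f y * k x y) \<le> norm (\<bar>B\<bar> * \<bar>f y\<bar>)"
    proof
      fix y have "\<bar>k x y\<bar> \<le> \<bar>B\<bar>" using bd[of x y] by (cases "a0 \<le> x \<and> x \<le> b0") (auto simp: indicator_def)
      then show "norm (f y * k x y) \<le> norm (\<bar>B\<bar> * \<bar>f y\<bar>)"
        by (simp add: abs_mult) (metis abs_ge_zero mult.commute mult_left_mono)
    qed
  qed simp
  have I: "integrable (lborel \<Otimes>\<^sub>M lborel) (\<lambda>p. f (snd p) * k (fst p) (snd p))"
  proof (rule lborel_pair.Fubini_integrable)
    show "integrable lborel (\<lambda>x. \<integral>y. norm (f (snd (x, y)) * k (fst (x, y)) (snd (x, y))) \<partial>lborel)"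
    proof (rule Bochner_Integration.integrable_bound[where f="\<lambda>x. B * (\<integral>y. \<bar>f y\<bar> \<partial>lborel) * indicator {a0..b0} x"])
      show "integrable lborel (\<lambda>x. B * (\<integral>y. \<bar>f y\<bar> \<partial>lborel) * indicator {a0..b0} x)"
        by (auto intro!: integrable_real_indicator simp: emeasure_lborel_Icc_eq)
      show "(\<lambda>x. \<integral>y. norm (f (snd (x, y)) * k (fst (x, y)) (snd (x, y))) \<partial>lborel) \<in> borel_measurable lborel"
        by measurable
      show "AE x in lborel. norm (\<integral>y. norm (f (snd (x, y)) * k (fst (x, y)) (snd (x, y))) \<partial>lborel)
          \<le> norm (B * (\<integral>y. \<bar>f y\<bar> \<partial>lborel) * indicator {a0..b0} x)"
      proof
        fix x
        have "(\<integral>y. norm (f y * k x y) \<partial>lborel) \<le> (\<integral>y. \<bar>f y\<bar> * (B * indicator {a0..b0} x) \<partial>lborel)"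
          apply (rule integral_mono)
          using int2[of x] f apply auto[2]
          by (simp add: abs_mult bd mult_left_mono)
        also have "\<dots> = B * (\<integral>y. \<bar>f y\<bar> \<partial>lborel) * indicator {a0..b0} x" by simp
        finally show "norm (\<integral>y. norm (f (snd (x, y)) * k (fst (x, y)) (snd (x, y))) \<partial>lborel)
          \<le> norm (B * (\<integral>y. \<bar>f y\<bar> \<partial>lborel) * indicator {a0..b0} x)"
          by (simp add: integral_nonneg_AE)
      qed
    qed
    show "AE x in lborel. integrable lborel (\<lambda>y. f (snd (x, y)) * k (fst (x, y)) (snd (x, y)))"
      using int2 by simp
  qed (rule Fm)
  have "(\<integral>y. (\<integral>x. f y * k x y \<partial>lborel) \<partial>lborel) = (\<integral>x. (\<integral>y. f y * k x y \<partial>lborel) \<partial>lborel)"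
    using lborel_pair.Fubini_integral[of "\<lambda>x y. f y * k x y"] I by (simp add: case_prod_beta')
  then show "(\<integral>x. (\<integral>y. f y * k x y \<partial>lborel) \<partial>lborel) = (\<integral>y. f y * (\<integral>x. k x y \<partial>lborel) \<partial>lborel)" by simp
  show "integrable lborel (\<lambda>x. \<integral>y. f y * k x y \<partial>lborel)"
    using lborel_pair.integrable_fst'[OF I] by simp
  show "integrable lborel (\<lambda>y. f y * (\<integral>x. k x y \<partial>lborel))"
    using lborel_pair.integrable_snd[of "\<lambda>x y. f y * k x y"] I by (simp add: case_prod_beta')
qed


lemma int_exp_affine:
  fixes a b k m :: real assumes ab: "a \<le> b" and k: "k \<noteq> 0"
  shows "(\<integral>x. indicator {a..b} x * exp (k*x + m) \<partial>lborel) = exp m * (exp(k*b) - exp(k*a))/k"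
proof -
  have "(\<integral>x. indicator {a..b} x *\<^sub>R exp (k*x + m) \<partial>lborel) = exp(k*b+m)/k - exp(k*a+m)/k"
    by (rule integral_FTC_atLeastAtMost[OF ab])
       (auto intro!: derivative_eq_intros continuous_intros simp: has_real_derivative_iff_has_vector_derivative[symmetric] k)
  then show ?thesis by (simp add: exp_add field_simps) (simp add: diff_divide_distrib eq_diff_eq)
qed

lemma Q_identity:
  fixes c :: "real \<Rightarrow> real" and r eta tau t :: real
  assumes r: "r > 0" and eta: "eta > 0" and tau: "tau > 0" and t: "t \<ge> 0"
    and ci: "set_integrable lborel {0..t} c"
  defines "Q \<equiv> \<lambda>t s. LINT u:{max 0 (t - s - tau)..t}|lborel. c u * exp (eta * (u - t + s))"
  shows "set_integrable lborel {-tau..0} (\<lambda>s. Q t s * exp (r * s))"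
    "set_integrable lborel {0..t} (\<lambda>u. exp(-r * u) * Q u 0)"
    "(1 - exp(-(r+eta) * tau))/(r+eta) * (LINT u:{0..t}|lborel. exp(-r * u) * c u)
     = exp(-r * t) * (LINT s:{-tau..0}|lborel. Q t s * exp (r * s)) + (LINT u:{0..t}|lborel. exp(-r * u) * Q u 0)"
proof -
  define b where "b = r + eta"
  have b: "b > 0" using r eta by (simp add: b_def)
  define fc where "fc = (\<lambda>y. indicator {0..t} y * c y)"
  have fci: "integrable lborel fc" using ci by (simp add: fc_def set_integrable_def)
  define k1 where "k1 = (\<lambda>x y. if -tau \<le> x \<and> x \<le> 0 \<and> 0 \<le> y \<and> y \<le> t \<and> t - x - tau \<le> y
       then exp (r * x + eta * (y - t + x)) else (0::real))"
  define k2 where "k2 = (\<lambda>x y. if 0 \<le> x \<and> x \<le> t \<and> 0 \<le> y \<and> y \<le> t \<and> x - tau \<le> y \<and> y \<le> x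
       then exp (-r * x + eta * (y - x)) else (0::real))"
  have k1m: "(\<lambda>p. k1 (fst p) (snd p)) \<in> borel_measurable (lborel \<Otimes>\<^sub>M lborel)"
    unfolding k1_def by measurable
  have k2m: "(\<lambda>p. k2 (fst p) (snd p)) \<in> borel_measurable (lborel \<Otimes>\<^sub>M lborel)"
    unfolding k2_def by measurable
  have k1b: "\<bar>k1 x y\<bar> \<le> 1 * indicator {-tau..0} x" for x y
    unfolding k1_def using r eta by (auto simp: indicator_def intro!: add_nonpos_nonpos mult_nonneg_nonpos)
  have k2b: "\<bar>k2 x y\<bar> \<le> 1 * indicator {0..t} x" for x y
    proof -
    have "eta * (y - x) \<le> r * x" if "0 \<le> y" "y \<le> x"
    proof -
      have "eta * (y - x) \<le> 0" using that eta by (intro mult_nonneg_nonpos) auto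
      also have "0 \<le> r * x" using that r by simp
      finally show ?thesis .
    qed
    then show ?thesis unfolding k2_def by (auto simp: indicator_def)
  qed
  note F1 = fubini_kernel[OF fci k1m k1b]
  note F2 = fubini_kernel[OF fci k2m k2b]
  have R1: "indicator {-tau..0} s * (Q t s * exp (r * s)) = (\<integral>y. fc y * k1 s y \<partial>lborel)" for s
  proof (cases "-tau \<le> s \<and> s \<le> 0")
    case True
    have "indicator {-tau..0} s * (Q t s * exp (r * s))
        = (\<integral>y. indicator {max 0 (t - s - tau)..t} y * (c y * exp (eta * (y - t + s))) * exp (r * s) \<partial>lborel)"
      using True by (simp add: Q_def set_lebesgue_integral_def)
    also have "\<dots> = (\<integral>y. fc y * k1 s y \<partial>lborel)"
      by (rule Bochner_Integration.integral_cong)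
         (auto simp: fc_def k1_def indicator_def True algebra_simps simp flip: exp_add)
    finally show ?thesis .
  next
    case False then show ?thesis by (auto simp: k1_def)
  qed
  have R2: "indicator {0..t} x * (exp(-r * x) * Q x 0) = (\<integral>y. fc y * k2 x y \<partial>lborel)" for x
  proof (cases "0 \<le> x \<and> x \<le> t")
    case True
    have "indicator {0..t} x * (exp(-r * x) * Q x 0)
        = (\<integral>y. exp(-r * x) * (indicator {max 0 (x - tau)..x} y * (c y * exp (eta * (y - x)))) \<partial>lborel)"
      using True by (simp add: Q_def set_lebesgue_integral_def)
    also have "\<dots> = (\<integral>y. fc y * k2 x y \<partial>lborel)"
      by (rule Bochner_Integration.integral_cong)
         (use True in \<open>auto simp: fc_def k2_def indicator_def algebra_simps simp flip: exp_add\<close>)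
    finally show ?thesis .
  next
    case False then show ?thesis by (auto simp: k2_def)
  qed
  show I1: "set_integrable lborel {-tau..0} (\<lambda>s. Q t s * exp (r * s))"
    unfolding set_integrable_def using F1(2) by (simp add: R1)
  show I2: "set_integrable lborel {0..t} (\<lambda>u. exp(-r * u) * Q u 0)"
    unfolding set_integrable_def real_scaleR_def R2 by (rule F2(2))
  have K1: "fc y * (\<integral>x. k1 x y \<partial>lborel) =
      fc y * (if t - y - tau \<le> 0 then exp (eta * (y-t)) * (1 - exp (b * (t-y-tau))) / b else 0)" for y
  proof (cases "0 \<le> y \<and> y \<le> t")
    case True
    show ?thesis
    proof (cases "t - y - tau \<le> 0")
      case True2: True
      have "(\<integral>x. k1 x y \<partial>lborel) = (\<integral>x. indicator {t-y-tau..0} x * exp (b * x + eta * (y-t)) \<partial>lborel)"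
        by (rule Bochner_Integration.integral_cong)
           (use True True2 in \<open>auto simp: k1_def indicator_def b_def algebra_simps\<close>)
      also have "\<dots> = exp (eta * (y-t)) * (exp (b * 0) - exp (b * (t-y-tau))) / b"
        by (rule int_exp_affine) (use True2 b in auto)
      finally show ?thesis using True2 by simp
    next
      case False
      have "k1 x y = 0" for x using False by (simp add: k1_def)
      then show ?thesis using False by simp
    qed
  next
    case False then show ?thesis by (auto simp: fc_def)
  qed
  have K2: "fc y * (\<integral>x. k2 x y \<partial>lborel) =
      fc y * (exp (eta * y) * (exp (-b * min t (y+tau)) - exp (-b * y)) / (-b))" for y
  proof (cases "0 \<le> y \<and> y \<le> t")
    case True
    have "(\<integral>x. k2 x y \<partial>lborel) = (\<integral>x. indicator {y..min t (y+tau)} x * exp ((-b) * x + eta * y) \<partial>lborel)"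
      by (rule Bochner_Integration.integral_cong)
         (use True in \<open>auto simp: k2_def indicator_def b_def algebra_simps\<close>)
    also have "\<dots> = exp (eta * y) * (exp (-b * min t (y+tau)) - exp (-b * y)) / (-b)"
      by (rule int_exp_affine) (use True b tau in auto)
    finally show ?thesis by simp
  next
    case False then show ?thesis by (auto simp: fc_def)
  qed
  have KK: "exp(-r * t) * (if t - y - tau \<le> 0 then exp (eta * (y-t)) * (1 - exp (b * (t-y-tau))) / b else 0)
      + exp (eta * y) * (exp (-b * min t (y+tau)) - exp (-b * y)) / (-b)
      = (1 - exp(-b * tau))/b * exp(-r * y)" for y
  proof (cases "t - y - tau \<le> 0")
    case True
    then have m: "min t (y+tau) = t" by simp
    have e1: "exp(-r * t) * exp (eta * (y-t)) = exp (eta * y) * exp (-b * t)"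
      by (simp add: exp_add[symmetric] b_def algebra_simps)
    have e2: "exp(-r * t) * (exp (eta * (y-t)) * exp (b * (t-y-tau))) = exp(-b * tau) * exp(-r * y)"
      by (simp add: exp_add[symmetric] b_def algebra_simps)
    have e3: "exp (eta * y) * exp (-b * y) = exp(-r * y)"
      by (simp add: exp_add[symmetric] b_def algebra_simps)
    have "exp(-r * t) * (if t - y - tau \<le> 0 then exp (eta * (y-t)) * (1 - exp (b * (t-y-tau))) / b else 0)
      + exp (eta * y) * (exp (-b * min t (y+tau)) - exp (-b * y)) / (-b)
      = (exp(-r * t) * exp (eta * (y-t)) - exp(-r * t) * (exp (eta * (y-t)) * exp (b * (t-y-tau)))
         - exp (eta * y) * exp (-b * t) + exp (eta * y) * exp (-b * y)) / b"
      using True b unfolding m by (simp add: field_simps)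
    also have "\<dots> = (1 - exp(-b * tau))/b * exp(-r * y)"
      unfolding e1 e2 e3 using b by (simp add: field_simps)
    finally show ?thesis .
  next
    case False
    then have m: "min t (y+tau) = y + tau" by simp
    have e3: "exp (eta * y) * exp (-b * y) = exp(-r * y)"
      by (simp add: exp_add[symmetric] b_def algebra_simps)
    have e4: "exp (eta * y) * exp (-b * (y+tau)) = exp(-b * tau) * exp(-r * y)"
      by (simp add: exp_add[symmetric] b_def algebra_simps)
    have "exp(-r * t) * (if t - y - tau \<le> 0 then exp (eta * (y-t)) * (1 - exp (b * (t-y-tau))) / b else 0)
      + exp (eta * y) * (exp (-b * min t (y+tau)) - exp (-b * y)) / (-b)
      = (exp (eta * y) * exp (-b * y) - exp (eta * y) * exp (-b * (y+tau))) / b"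
      using False b unfolding m by (simp add: field_simps)
    also have "\<dots> = (1 - exp(-b * tau))/b * exp(-r * y)"
      unfolding e3 e4 using b by (simp add: field_simps)
    finally show ?thesis .
  qed
  have "exp(-r * t) * (LINT s:{-tau..0}|lborel. Q t s * exp (r * s)) + (LINT u:{0..t}|lborel. exp(-r * u) * Q u 0)
      = exp(-r * t) * (\<integral>y. fc y * (\<integral>x. k1 x y \<partial>lborel) \<partial>lborel) + (\<integral>y. fc y * (\<integral>x. k2 x y \<partial>lborel) \<partial>lborel)"
  proof -
    have "(LINT s:{-tau..0}|lborel. Q t s * exp (r * s)) = (\<integral>y. fc y * (\<integral>x. k1 x y \<partial>lborel) \<partial>lborel)"
      unfolding set_lebesgue_integral_def real_scaleR_def R1 by (rule F1(1))
    moreover have "(LINT u:{0..t}|lborel. exp(-r * u) * Q u 0) = (\<integral>y. fc y * (\<integral>x. k2 x y \<partial>lborel) \<partial>lborel)"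
      unfolding set_lebesgue_integral_def real_scaleR_def R2 by (rule F2(1))
    ultimately show ?thesis by simp
  qed
  also have "\<dots> = (\<integral>y. exp(-r * t) * (fc y * (\<integral>x. k1 x y \<partial>lborel)) + fc y * (\<integral>x. k2 x y \<partial>lborel) \<partial>lborel)"
    using F1(3) F2(3) by simp
  also have "\<dots> = (\<integral>y. fc y * ((1 - exp(-b * tau))/b * exp(-r * y)) \<partial>lborel)"
  proof (rule Bochner_Integration.integral_cong)
    fix y
    have "exp(-r * t) * (fc y * (\<integral>x. k1 x y \<partial>lborel)) + fc y * (\<integral>x. k2 x y \<partial>lborel)
       = fc y * (exp(-r * t) * (if t - y - tau \<le> 0 then exp (eta * (y-t)) * (1 - exp (b * (t-y-tau))) / b else 0)
      + exp (eta * y) * (exp (-b * min t (y+tau)) - exp (-b * y)) / (-b))"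
      unfolding K1 K2 by (simp only: distrib_left mult.assoc mult.left_commute)
    also have "\<dots> = fc y * ((1 - exp(-b * tau))/b * exp(-r * y))" unfolding KK ..
    finally show "exp(-r * t) * (fc y * (\<integral>x. k1 x y \<partial>lborel)) + fc y * (\<integral>x. k2 x y \<partial>lborel)
       = fc y * ((1 - exp(-b * tau))/b * exp(-r * y))" .
  qed simp
  also have "\<dots> = (1 - exp(-(r+eta) * tau))/(r+eta) * (LINT u:{0..t}|lborel. exp(-r * u) * c u)"
    by (simp add: fc_def b_def set_lebesgue_integral_def algebra_simps flip: integral_mult_right_zero)
  finally show "(1 - exp(-(r+eta) * tau))/(r+eta) * (LINT u:{0..t}|lborel. exp(-r * u) * c u)
     = exp(-r * t) * (LINT s:{-tau..0}|lborel. Q t s * exp (r * s)) + (LINT u:{0..t}|lborel. exp(-r * u) * Q u 0)"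
    by simp
qed

lemma P_identity:
  fixes x1 :: "real \<Rightarrow> real" and r tau t :: real
  assumes r: "r > 0" and tau: "tau > 0" and t: "t \<ge> 0" and x1c: "continuous_on {-tau..0} x1"
  defines "P \<equiv> \<lambda>t s. if s - t \<ge> -tau then x1 (s - t) else 0"
  shows "set_integrable lborel {-tau..0} (\<lambda>s. P t s * exp (r * s))"
    "set_integrable lborel {0..t} (\<lambda>u. exp (-r * u) * P u 0)"
    "exp (-r * t) * (LINT s:{-tau..0}|lborel. P t s * exp (r * s))
      = (LINT s:{-tau..0}|lborel. x1 s * exp (r * s)) - (LINT u:{0..t}|lborel. exp (-r * u) * P u 0)"
proof -
  define g where "g = (\<lambda>v. indicator {-tau..0} v * (x1 v * exp (r * v)))"
  have "continuous_on {-tau..0} (\<lambda>v. x1 v * exp (r * v))"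
    by (intro continuous_intros x1c)
  then have gi: "integrable lborel g"
    using borel_integrable_atLeastAtMost'[of "-tau" 0 "\<lambda>v. x1 v * exp (r * v)"]
    by (simp add: g_def set_integrable_def)
  have gm[measurable]: "g \<in> borel_measurable lborel" using gi by auto
  define h1 where "h1 = (\<lambda>v. indicator {-tau..-t} v * g v)"
  define h2 where "h2 = (\<lambda>v. indicator {-t..0} v * g v)"
  have h1i: "integrable lborel h1"
    by (rule Bochner_Integration.integrable_bound[OF gi]) (auto simp: h1_def indicator_def)
  have h2i: "integrable lborel h2"
    by (rule Bochner_Integration.integrable_bound[OF gi]) (auto simp: h2_def indicator_def)
  have E1: "indicator {-tau..0} s * (P t s * exp (r * s)) = exp (r * t) * h1 (-t + s)" for s
    using t by (auto simp: P_def h1_def g_def indicator_def algebra_simps simp flip: exp_add)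
  have E2: "indicator {0..t} u * (exp (-r * u) * P u 0) = h2 (0 + (-1) * u)" for u
    using t by (auto simp: P_def h2_def g_def indicator_def algebra_simps)
  have i1: "integrable lborel (\<lambda>s. h1 (-t + s))"
    using lborel_integrable_real_affine[OF h1i, of 1 "-t"] by simp
  have i2: "integrable lborel (\<lambda>u. h2 (0 + (-1) * u))"
    using lborel_integrable_real_affine[OF h2i, of "-1" 0] by simp
  show "set_integrable lborel {-tau..0} (\<lambda>s. P t s * exp (r * s))"
    unfolding set_integrable_def real_scaleR_def E1 using i1 by simp
  show "set_integrable lborel {0..t} (\<lambda>u. exp (-r * u) * P u 0)"
    unfolding set_integrable_def real_scaleR_def E2 using i2 by simp
  have S1: "exp (-r * t) * (LINT s:{-tau..0}|lborel. P t s * exp (r * s)) = integral\<^sup>L lborel h1"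
  proof -
    have "(LINT s:{-tau..0}|lborel. P t s * exp (r * s)) = exp (r * t) * (\<integral>s. h1 (-t + s) \<partial>lborel)"
      unfolding set_lebesgue_integral_def real_scaleR_def E1 by simp
    also have "(\<integral>s. h1 (-t + s) \<partial>lborel) = integral\<^sup>L lborel h1"
      using lborel_integral_real_affine[of 1 h1 "-t"] by simp
    finally show ?thesis by (simp add: exp_minus field_simps)
  qed
  have S2: "(LINT u:{0..t}|lborel. exp (-r * u) * P u 0) = integral\<^sup>L lborel h2"
  proof -
    have "(LINT u:{0..t}|lborel. exp (-r * u) * P u 0) = (\<integral>u. h2 (0 + (-1) * u) \<partial>lborel)"
      unfolding set_lebesgue_integral_def real_scaleR_def E2 by simp
    also have "\<dots> = integral\<^sup>L lborel h2"
      using lborel_integral_real_affine[of "-1" h2 0] by simp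
    finally show ?thesis .
  qed
  have S3: "(LINT s:{-tau..0}|lborel. x1 s * exp (r * s)) = integral\<^sup>L lborel h1 + integral\<^sup>L lborel h2"
  proof -
    have "(LINT s:{-tau..0}|lborel. x1 s * exp (r * s)) = integral\<^sup>L lborel g"
      by (simp add: set_lebesgue_integral_def g_def)
    also have "\<dots> = (\<integral>v. h1 v + h2 v \<partial>lborel)"
    proof (rule integral_cong_AE)
      show "AE v in lborel. g v = h1 v + h2 v"
        using AE_lborel_singleton[of "-t"]
        by eventually_elim (auto simp: h1_def h2_def g_def indicator_def)
    qed (use h1i h2i in auto)
    also have "\<dots> = integral\<^sup>L lborel h1 + integral\<^sup>L lborel h2"
      using h1i h2i by simp
    finally show ?thesis .
  qed
  show "exp (-r * t) * (LINT s:{-tau..0}|lborel. P t s * exp (r * s))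
      = (LINT s:{-tau..0}|lborel. x1 s * exp (r * s)) - (LINT u:{0..t}|lborel. exp (-r * u) * P u 0)"
    using S1 S2 S3 by simp
qed

lemma set_integrable_cont_mult:
  fixes c g :: "real \<Rightarrow> real"
  assumes ci: "set_integrable lborel {a..b} c" and gc: "continuous_on {a..b} g"
  shows "set_integrable lborel {a..b} (\<lambda>u. g u * c u)"
proof -
  have "bounded (g ` {a..b})"
    using compact_imp_bounded[OF compact_continuous_image[OF gc compact_Icc]] .
  then obtain M where "\<forall>y\<in>g ` {a..b}. norm y \<le> M" by (auto simp: bounded_iff)
  then have M: "\<And>x. x \<in> {a..b} \<Longrightarrow> norm (g x) \<le> M" by auto
  have cm: "(\<lambda>x. indicator {a..b} x * c x) \<in> borel_measurable lborel"
    using ci by (auto simp: set_integrable_def)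
  have gm: "(\<lambda>x. indicator {a..b} x * g x) \<in> borel_measurable lborel"
    using borel_measurable_continuous_on_indicator[OF _ gc] by simp
  have eq: "(\<lambda>x. indicator {a..b} x * (g x * c x)) = (\<lambda>x. (indicator {a..b} x * g x) * (indicator {a..b} x * c x))"
    by (auto simp: indicator_def)
  show ?thesis
    unfolding set_integrable_def real_scaleR_def
  proof (rule Bochner_Integration.integrable_bound[where f="\<lambda>x. M * \<bar>indicator {a..b} x * c x\<bar>"])
    show "integrable lborel (\<lambda>x. M * \<bar>indicator {a..b} x * c x\<bar>)"
      using ci by (auto simp: set_integrable_def)
    show "(\<lambda>x. indicator {a..b} x * (g x * c x)) \<in> borel_measurable lborel"
      unfolding eq using gm cm by measurable
    show "AE x in lborel. norm (indicator {a..b} x * (g x * c x)) \<le> norm (M * \<bar>indicator {a..b} x * c x\<bar>)"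
    proof
      fix x show "norm (indicator {a..b} x * (g x * c x)) \<le> norm (M * \<bar>indicator {a..b} x * c x\<bar>)"
      proof (cases "x \<in> {a..b}")
        case True
        then have "\<bar>g x\<bar> \<le> M" using M by simp
        then show ?thesis using True by (simp add: abs_mult mult_right_mono)
      qed simp
    qed
  qed
qed

lemma K_identity:
  fixes c :: "real \<Rightarrow> real" and x1 :: "real \<Rightarrow> real"
  assumes r: "A - delta > 0" and eta: "eta > 0" and tau: "tau > 0" and t: "t \<ge> 0"
    and ci: "set_integrable lborel {0..t} c" and x1c: "continuous_on {-tau..0} x1"
  shows "exp (-(A - delta) * t) * Gfun A delta eps eta tau (state A delta eps eta tau (x0, x1) c t)
    = Gfun A delta eps eta tau (x0, x1)
      - (LINT u:{0..t}|lborel. exp (-(A - delta) * u) * (c u - stX1 eps eta tau x1 c u 0))"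
proof -
  define r where "r = A - delta"
  have r0: "r > 0" using r by (simp add: r_def)
  define b where "b = r + eta"
  have b: "b > 0" using r0 eta by (simp add: b_def)
  define P where "P = (\<lambda>t s. if s - t \<ge> -tau then x1 (s - t) else 0)"
  define Q where "Q = (\<lambda>t s. LINT u:{max 0 (t - s - tau)..t}|lborel. c u * exp (eta * (u - t + s)))"
  have X1: "stX1 eps eta tau x1 c t' = (\<lambda>s. P t' s + eps * Q t' s)" for t'
    by (simp add: stX1_def P_def Q_def)
  have PI1: "set_integrable lborel {-tau..0} (\<lambda>s. P t s * exp (r * s))"
    using P_identity(1)[OF r0 tau t x1c] by (simp add: P_def)
  have PI2: "set_integrable lborel {0..t} (\<lambda>u. exp (-r * u) * P u 0)"
    using P_identity(2)[OF r0 tau t x1c] by (simp add: P_def)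
  have PI3: "exp (-r * t) * (LINT s:{-tau..0}|lborel. P t s * exp (r * s))
      = (LINT s:{-tau..0}|lborel. x1 s * exp (r * s)) - (LINT u:{0..t}|lborel. exp (-r * u) * P u 0)"
    using P_identity(3)[OF r0 tau t x1c] by (simp add: P_def)
  have QI1: "set_integrable lborel {-tau..0} (\<lambda>s. Q t s * exp (r * s))"
    using Q_identity(1)[OF r0 eta tau t ci] by (simp add: Q_def)
  have QI2: "set_integrable lborel {0..t} (\<lambda>u. exp(-r * u) * Q u 0)"
    using Q_identity(2)[OF r0 eta tau t ci] by (simp add: Q_def)
  have QI3: "(1 - exp(-(r+eta) * tau))/(r+eta) * (LINT u:{0..t}|lborel. exp(-r * u) * c u)
     = exp(-r * t) * (LINT s:{-tau..0}|lborel. Q t s * exp (r * s)) + (LINT u:{0..t}|lborel. exp(-r * u) * Q u 0)"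
    using Q_identity(3)[OF r0 eta tau t ci] by (simp add: Q_def)
  have ec: "set_integrable lborel {0..t} (\<lambda>u. exp (-r * u) * c u)"
    by (rule set_integrable_cont_mult[OF ci]) (intro continuous_intros)
  have x1i: "set_integrable lborel {-tau..0} (\<lambda>s. x1 s * exp (r * s))"
    by (rule borel_integrable_atLeastAtMost') (intro continuous_intros x1c)
  have k0: "kappa0 A delta eps eta tau = 1 - eps * (1 - exp (-b * tau)) / b"
  proof -
    have "(LINT s:{-tau..0}|lborel. exp ((A - delta + eta) * s)) = (\<integral>s. indicator {-tau..0} s * exp (b * s + 0) \<partial>lborel)"
      by (simp add: set_lebesgue_integral_def b_def r_def)
    also have "\<dots> = exp 0 * (exp (b * 0) - exp (b * (-tau))) / b"
      by (rule int_exp_affine) (use tau b in auto)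
    finally show ?thesis by (simp add: kappa0_def)
  qed
  have X0: "exp (-r * t) * stX0 A delta x0 c t = x0 - (LINT u:{0..t}|lborel. exp (-r * u) * c u)"
  proof -
    have "(LINT u:{0..t}|lborel. exp ((A - delta) * (t - u)) * c u)
        = (LINT u:{0..t}|lborel. exp (r * t) * (exp (-r * u) * c u))"
      by (rule set_lebesgue_integral_cong) (auto simp: r_def algebra_simps simp flip: exp_add)
    also have "\<dots> = exp (r * t) * (LINT u:{0..t}|lborel. exp (-r * u) * c u)" by simp
    finally show ?thesis
      by (simp add: stX0_def r_def[symmetric] right_diff_distrib exp_minus field_simps)
  qed
  have G1: "Gfun A delta eps eta tau (state A delta eps eta tau (x0, x1) c t)
     = stX0 A delta x0 c t * kappa0 A delta eps eta tau
       - (LINT s:{-tau..0}|lborel. P t s * exp (r * s)) - eps * (LINT s:{-tau..0}|lborel. Q t s * exp (r * s))"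
  proof -
    have "(LINT s:{-tau..0}|lborel. (P t s + eps * Q t s) * kappa1 A delta s)
       = (LINT s:{-tau..0}|lborel. - (P t s * exp (r * s)) - eps * (Q t s * exp (r * s)))"
      by (rule set_lebesgue_integral_cong) (auto simp: kappa1_def r_def algebra_simps)
    also have "\<dots> = - (LINT s:{-tau..0}|lborel. P t s * exp (r * s)) - eps * (LINT s:{-tau..0}|lborel. Q t s * exp (r * s))"
    proof -
      have m: "set_integrable lborel {-tau..0} (\<lambda>s. - (P t s * exp (r * s)))"
        using PI1 by (simp add: set_integrable_def)
      have "(LINT s:{-tau..0}|lborel. - (P t s * exp (r * s)) - eps * (Q t s * exp (r * s)))
         = (LINT s:{-tau..0}|lborel. - (P t s * exp (r * s))) - (LINT s:{-tau..0}|lborel. eps * (Q t s * exp (r * s)))"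
        by (rule set_integral_diff(2)[OF m]) (use QI1 in auto)
      then show ?thesis by (simp add: set_integral_uminus[OF PI1])
    qed
    finally show ?thesis by (simp add: Gfun_def state_def X1)
  qed
  have G0: "Gfun A delta eps eta tau (x0, x1) = x0 * kappa0 A delta eps eta tau - (LINT s:{-tau..0}|lborel. x1 s * exp (r * s))"
  proof -
    have "(LINT s:{-tau..0}|lborel. x1 s * kappa1 A delta s) = (LINT s:{-tau..0}|lborel. - (x1 s * exp (r * s)))"
      by (rule set_lebesgue_integral_cong) (auto simp: kappa1_def r_def)
    then show ?thesis using x1i by (simp add: Gfun_def set_integral_uminus)
  qed
  have H: "(LINT u:{0..t}|lborel. exp (-(A - delta) * u) * (c u - stX1 eps eta tau x1 c u 0))
     = (LINT u:{0..t}|lborel. exp (-r * u) * c u) - (LINT u:{0..t}|lborel. exp (-r * u) * P u 0)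
       - eps * (LINT u:{0..t}|lborel. exp (-r * u) * Q u 0)"
  proof -
    have "(LINT u:{0..t}|lborel. exp (-(A - delta) * u) * (c u - stX1 eps eta tau x1 c u 0))
       = (LINT u:{0..t}|lborel. (exp (-r * u) * c u - exp (-r * u) * P u 0) - eps * (exp (-r * u) * Q u 0))"
      by (rule set_lebesgue_integral_cong) (auto simp: X1 r_def algebra_simps)
    also have "\<dots> = (LINT u:{0..t}|lborel. exp (-r * u) * c u - exp (-r * u) * P u 0) - eps * (LINT u:{0..t}|lborel. exp (-r * u) * Q u 0)"
      using ec PI2 QI2 by (simp add: set_integral_diff)
    also have "\<dots> = (LINT u:{0..t}|lborel. exp (-r * u) * c u) - (LINT u:{0..t}|lborel. exp (-r * u) * P u 0)
       - eps * (LINT u:{0..t}|lborel. exp (-r * u) * Q u 0)"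
      using ec PI2 by (simp add: set_integral_diff)
    finally show ?thesis .
  qed
  define D where "D = (1 - exp (-b * tau)) / b"
  have k0': "kappa0 A delta eps eta tau = 1 - eps * D" using k0 by (simp add: D_def)
  have QI3': "D * (LINT u:{0..t}|lborel. exp(-r * u) * c u)
     = exp(-r * t) * (LINT s:{-tau..0}|lborel. Q t s * exp (r * s)) + (LINT u:{0..t}|lborel. exp(-r * u) * Q u 0)"
    using QI3 by (simp add: D_def b_def)
  have e: "exp (-(A - delta) * t) = exp (-r * t)" by (simp add: r_def)
  show ?thesis unfolding e G1 G0 H k0'
    using X0 PI3 QI3' by algebra
qed

lemma gronwall_ae:
  fixes f :: "real \<Rightarrow> real" and K :: real
  assumes fi: "\<And>T. T \<ge> 0 \<Longrightarrow> set_integrable lborel {0..T} f"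
    and ae: "AE t in lborel. t \<ge> 0 \<longrightarrow> 0 \<le> f t \<and> f t \<le> K * (LINT u:{0..t}|lborel. f u)"
    and K: "K \<ge> 0"
  shows "AE t in lborel. t \<ge> 0 \<longrightarrow> f t = 0"
proof -
  define F where "F t = (LINT u:{0..t}|lborel. f u)" for t
  have fi': "integrable lborel (\<lambda>u. indicator {0..T} u * f u)" if "T \<ge> 0" for T
    using fi[OF that] by (simp add: set_integrable_def)
  have Fmono: "F s \<le> F t" if "0 \<le> s" "s \<le> t" for s t
    unfolding F_def set_lebesgue_integral_def real_scaleR_def
  proof (rule integral_mono_AE[OF fi' fi'])
    show "AE x in lborel. indicator {0..s} x * f x \<le> indicator {0..t} x * f x"
      using ae by eventually_elim (use that in \<open>auto simp: indicator_def\<close>)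
  qed (use that in auto)
  have F0: "F t \<ge> 0" if "0 \<le> t" for t
    unfolding F_def set_lebesgue_integral_def real_scaleR_def
    by (rule integral_nonneg_AE) (use ae in \<open>eventually_elim, auto simp: indicator_def\<close>)
  define d where "d = 1 / (2 * (K + 1))"
  have d: "d > 0" "K * d \<le> 1/2" using K by (auto simp: d_def field_simps)
  have claim: "\<forall>u. 0 \<le> u \<and> u < real n * d \<longrightarrow> F u = 0" for n
  proof (induction n)
    case 0 then show ?case by simp
  next
    case (Suc n)
    show ?case
    proof (intro allI impI)
      fix t assume t: "0 \<le> t \<and> t < real (Suc n) * d"
      show "F t = 0"
      proof (cases "t < real n * d")
        case True then show ?thesis using Suc t by auto
      next
        case False
        define s0 where "s0 = real n * d"
        have s0: "0 \<le> s0" "s0 \<le> t" "t - s0 \<le> d" using False t d by (auto simp: s0_def algebra_simps)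
        define Ft where "Ft = F t"
        have Ft: "F t = (\<integral>u. indicator {0..t} u * f u \<partial>lborel)" by (simp add: F_def set_lebesgue_integral_def)
        have "F t \<le> (\<integral>u. indicator {0..t} u * (K * Ft * indicator {s0..t} u) \<partial>lborel)"
          unfolding Ft
        proof (rule integral_mono_AE[OF fi'])
          show "integrable lborel (\<lambda>u. indicator {0..t} u * (K * Ft * indicator {s0..t} u))"
          proof -
            have "integrable lborel (\<lambda>u. (K * Ft) * indicator {s0..t} u)"
              by (intro integrable_mult_right integrable_real_indicator) (auto simp: emeasure_lborel_Icc_eq)
            also have "(\<lambda>u. (K * Ft) * indicator {s0..t} u)
               = (\<lambda>u. indicator {0..t} u * (K * Ft * indicator {s0..t} u))"
              using s0 by (auto simp: indicator_def fun_eq_iff)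
            finally show ?thesis .
          qed
          show "AE u in lborel. indicator {0..t} u * f u \<le> indicator {0..t} u * (K * Ft * indicator {s0..t} u)"
            using ae
          proof eventually_elim
            case (elim u)
            show ?case
            proof (cases "0 \<le> u \<and> u \<le> t")
              case True
              show ?thesis
              proof (cases "u < s0")
                case True2: True
                have "F u = 0" using Suc True True2 by (auto simp: s0_def)
                then show ?thesis using elim True True2 by (auto simp: F_def Ft_def indicator_def)
              next
                case False2: False
                have "K * F u \<le> K * F t" using Fmono[of u t] True K by (auto intro: mult_left_mono)
                then show ?thesis using elim True False2 by (auto simp: F_def Ft_def indicator_def)
              qed
            qed (auto simp: indicator_def)
          qed
        qed (use t in auto)
        also have "\<dots> = (\<integral>u. K * F t * indicator {s0..t} u \<partial>lborel)"
          unfolding Ft_def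
          by (rule Bochner_Integration.integral_cong) (use s0 in \<open>auto simp: indicator_def\<close>)
        also have "\<dots> = K * F t * (t - s0)" using s0 by simp
        also have "\<dots> \<le> K * F t * d"
          using s0 K F0[of t] t by (intro mult_left_mono) auto
        also have "\<dots> \<le> F t / 2" using d F0[of t] t
          by (metis mult.commute mult.left_commute mult_left_mono times_divide_eq_right mult.right_neutral)
        finally have "F t \<le> 0" by simp
        then show ?thesis using F0[of t] t by simp
      qed
    qed
  qed
  have Fz: "F t = 0" if "t \<ge> 0" for t
  proof -
    obtain n where "t / d < real n" using reals_Archimedean2 by blast
    then have "t < real n * d" using d by (simp add: field_simps)
    then show ?thesis using claim that by auto
  qed
  have AEn: "AE u in lborel. indicator {0..real n} u * f u = 0" for n
  proof -
    have "integral\<^sup>L lborel (\<lambda>u. indicator {0..real n} u * f u) = 0"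
      using Fz[of "real n"] by (simp add: F_def set_lebesgue_integral_def)
    moreover have "AE u in lborel. 0 \<le> indicator {0..real n} u * f u"
      using ae by eventually_elim (auto simp: indicator_def)
    ultimately show ?thesis
      using integral_nonneg_eq_0_iff_AE[OF fi'[of "real n"]] by simp
  qed
  have "AE u in lborel. \<forall>n. indicator {0..real n} u * f u = 0"
    by (rule AE_all_countable[THEN iffD2]) (use AEn in blast)
  then show ?thesis
  proof eventually_elim
    case (elim u)
    show ?case
    proof
      assume u: "u \<ge> 0"
      obtain n where "u < real n" using reals_Archimedean2 by blast
      then show "f u = 0" using elim[rule_format, of n] u by (auto simp: indicator_def split: if_splits)
    qed
  qed
qed

lemma meas_restrict_limit:
  fixes f :: "real \<Rightarrow> real"
  assumes "\<And>n::nat. (\<lambda>x. indicator {0..real n} x * f x) \<in> borel_measurable lborel"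
  shows "(\<lambda>x. indicator {0..} x * f x) \<in> borel_measurable lborel"
proof (rule borel_measurable_LIMSEQ_real[where u="\<lambda>n x. indicator {0..real n} x * f x"])
  fix x :: real
  obtain N where N: "x < real N" using reals_Archimedean2 by blast
  have "eventually (\<lambda>n. indicator {0..real n} x * f x = indicator {0..} x * f x) sequentially"
    unfolding eventually_sequentially
  proof (intro exI allI impI)
    fix n assume "N \<le> n"
    then have "x \<le> real n" using N by (meson less_le_not_le of_nat_le_iff order.trans)
    then show "indicator {0..real n} x * f x = indicator {0..} x * f x" by (auto simp: indicator_def)
  qed
  then show "(\<lambda>n. indicator {0..real n} x * f x) \<longlonglongrightarrow> indicator {0..} x * f x"
    by (rule tendsto_eventually)
qed (rule assms)

lemma meas_indef_int:
  fixes f :: "real \<Rightarrow> real"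
  assumes fi: "set_integrable lborel {0..T} f"
  shows "(\<lambda>t. indicator {0..T} t * (LINT u:{0..t}|lborel. f u)) \<in> borel_measurable lborel"
proof -
  define fT where "fT = (\<lambda>u. indicator {0..T} u * f u)"
  have fTm[measurable]: "fT \<in> borel_measurable lborel" using fi by (auto simp: fT_def set_integrable_def)
  have km: "(\<lambda>p. (if 0 \<le> snd p \<and> snd p \<le> fst p then 1 else 0) * fT (snd p)) \<in> borel_measurable (lborel \<Otimes>\<^sub>M lborel)"
    by measurable
  have m: "(\<lambda>t. \<integral>u. (if 0 \<le> u \<and> u \<le> t then 1 else 0) * fT u \<partial>lborel) \<in> borel_measurable lborel"
    using lborel.borel_measurable_lebesgue_integral[of "\<lambda>t u. (if 0 \<le> u \<and> u \<le> t then 1 else 0) * fT u" lborel] km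
    by (simp add: case_prod_beta')
  have eq: "indicator {0..T} t * (LINT u:{0..t}|lborel. f u)
      = indicator {0..T} t * (\<integral>u. (if 0 \<le> u \<and> u \<le> t then 1 else 0) * fT u \<partial>lborel)" for t
  proof (cases "t \<in> {0..T}")
    case True
    have "(LINT u:{0..t}|lborel. f u) = (\<integral>u. (if 0 \<le> u \<and> u \<le> t then 1 else 0) * fT u \<partial>lborel)"
      unfolding set_lebesgue_integral_def
      by (rule Bochner_Integration.integral_cong) (use True in \<open>auto simp: fT_def indicator_def\<close>)
    then show ?thesis by simp
  qed simp
  show ?thesis unfolding eq using m by measurable
qed

lemma set_integrable_Icc_sub:
  fixes f :: "real \<Rightarrow> real"
  assumes "set_integrable lborel {a..b} f" "a \<le> c" "d \<le> b"
  shows "set_integrable lborel {c..d} f"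
  using set_integrable_subset[OF assms(1)] assms(2,3) by auto

locale opt =
  fixes A delta rho eps eta tau gam x0 :: real and x1 :: "real \<Rightarrow> real"
  assumes pos: "A > 0" "delta > 0" "rho > 0" "eps > 0" "eta > 0" "tau > 0" "gam > 0" "gam \<noteq> 1"
    and epseta: "eps \<le> eta" and r0: "A - delta > 0" and rho_gt: "rho > (A - delta) * (1 - gam)"
    and x1c: "continuous_on {-tau..0} x1" and x1nn: "\<And>s. s \<in> {-tau..0} \<Longrightarrow> x1 s \<ge> 0"
    and Y0pos: "Gfun A delta eps eta tau (x0, x1) > 0"
begin

definition "r = A - delta"
definition "a = alpha A delta rho gam"
definition "Y0 = Gfun A delta eps eta tau (x0, x1)"
definition "h c t = stX1 eps eta tau x1 c t 0"
definition "dst t = a * Y0 * exp ((r - a) * t)"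
definition "Gs c t = Gfun A delta eps eta tau (state A delta eps eta tau (x0, x1) c t)"

lemma rpos: "r > 0" using r0 by (simp add: r_def)
lemma apos: "a > 0"
  using rho_gt pos by (simp add: a_def alpha_def)
lemma Y0p: "Y0 > 0" using Y0pos by (simp add: Y0_def)

lemma kappa0_pos: "kappa0 A delta eps eta tau > 0"
proof -
  define b where "b = r + eta"
  have b: "b > 0" using rpos pos by (simp add: b_def)
  have "(LINT s:{-tau..0}|lborel. exp ((A - delta + eta) * s)) = (\<integral>s. indicator {-tau..0} s * exp (b * s + 0) \<partial>lborel)"
    by (simp add: set_lebesgue_integral_def b_def r_def)
  also have "\<dots> = exp 0 * (exp (b * 0) - exp (b * (-tau))) / b"
    by (rule int_exp_affine) (use pos b in auto)
  finally have k: "kappa0 A delta eps eta tau = 1 - eps * ((1 - exp (- (b * tau))) / b)" by (simp add: kappa0_def)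
  have "(1 - exp (- (b * tau))) / b < 1 / b" using b by (simp add: divide_strict_right_mono)
  moreover have "eps * (1 / b) < 1" using b epseta rpos pos by (simp add: b_def field_simps)
  ultimately have "eps * ((1 - exp (- (b * tau))) / b) < 1"
    using pos by (smt (verit, best) mult_strict_left_mono)
  then show ?thesis using k by simp
qed

lemma L1_sub: "L1loc c \<Longrightarrow> 0 \<le> T \<Longrightarrow> set_integrable lborel {0..T} c"
  by (simp add: L1loc_def)

lemma K: assumes "L1loc c" "0 \<le> t" shows
   "exp (-r * t) * Gs c t = Y0 - (LINT u:{0..t}|lborel. exp (-r * u) * (c u - h c u))"
  unfolding r_def Gs_def Y0_def h_def by (rule K_identity[OF r0 pos(5) pos(6) assms(2) L1_sub[OF assms] x1c])

lemma h_int: assumes "L1loc c" "0 \<le> T"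
  shows "set_integrable lborel {0..T} (\<lambda>u. exp (-r * u) * h c u)"
proof -
  have P: "set_integrable lborel {0..T} (\<lambda>u. exp (-r * u) * (if 0 - u \<ge> -tau then x1 (0 - u) else 0))"
    using P_identity(2)[OF rpos pos(6) assms(2) x1c] by simp
  have Q: "set_integrable lborel {0..T} (\<lambda>u. exp (-r * u) *
     (LINT v:{max 0 (u - 0 - tau)..u}|lborel. c v * exp (eta * (v - u + 0))))"
    using Q_identity(2)[OF rpos pos(5) pos(6) assms(2) L1_sub[OF assms]] by simp
  have "set_integrable lborel {0..T} (\<lambda>u. exp (-r * u) * (if 0 - u \<ge> -tau then x1 (0 - u) else 0)
     + eps * (exp (-r * u) * (LINT v:{max 0 (u - 0 - tau)..u}|lborel. c v * exp (eta * (v - u + 0)))))"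
    using P Q by auto
  then show ?thesis by (simp add: h_def stX1_def algebra_simps)
qed

lemma ec_int: assumes "L1loc c" "0 \<le> T"
  shows "set_integrable lborel {0..T} (\<lambda>u. exp (-r * u) * c u)"
  by (rule set_integrable_cont_mult[OF L1_sub[OF assms]]) (intro continuous_intros)

lemma g_int: assumes "L1loc c" "0 \<le> T"
  shows "set_integrable lborel {0..T} (\<lambda>u. exp (-r * u) * (c u - h c u))"
  using set_integral_diff(1)[OF ec_int[OF assms] h_int[OF assms]] by (simp add: algebra_simps)

lemma h_meas: assumes "L1loc c" "0 \<le> T"
  shows "(\<lambda>u. indicator {0..T} u * h c u) \<in> borel_measurable lborel"
proof -
  have m: "(\<lambda>u. indicator {0..T} u * (exp (-r * u) * h c u)) \<in> borel_measurable lborel"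
    using h_int[OF assms] by (auto simp: set_integrable_def)
  have "(\<lambda>u. exp (r * u) * (indicator {0..T} u * (exp (-r * u) * h c u))) \<in> borel_measurable lborel"
    using m by measurable
  also have "(\<lambda>u. exp (r * u) * (indicator {0..T} u * (exp (-r * u) * h c u))) = (\<lambda>u. indicator {0..T} u * h c u)"
    by (auto simp: fun_eq_iff simp flip: exp_add)
  finally show ?thesis .
qed

lemma c_meas: assumes "L1loc c" "0 \<le> T"
  shows "(\<lambda>u. indicator {0..T} u * c u) \<in> borel_measurable lborel"
  using L1_sub[OF assms] by (auto simp: set_integrable_def)

lemma d_meas: assumes "L1loc c"
  shows "(\<lambda>u. indicator {0..} u * max 0 (c u - h c u)) \<in> borel_measurable lborel"
proof (rule meas_restrict_limit)
  fix n :: nat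
  have "(\<lambda>u. max 0 (indicator {0..real n} u * c u - indicator {0..real n} u * h c u)) \<in> borel_measurable lborel"
    using c_meas[OF assms, of "real n"] h_meas[OF assms, of "real n"] by measurable
  also have "(\<lambda>u. max 0 (indicator {0..real n} u * c u - indicator {0..real n} u * h c u))
     = (\<lambda>u. indicator {0..real n} u * max 0 (c u - h c u))"
    by (auto simp: fun_eq_iff indicator_def)
  finally show "(\<lambda>u. indicator {0..real n} u * max 0 (c u - h c u)) \<in> borel_measurable lborel" .
qed

lemma X0: assumes "L1loc c" "0 \<le> t"
  shows "exp (-r * t) * stX0 A delta x0 c t = x0 - (LINT u:{0..t}|lborel. exp (-r * u) * c u)"
proof -
  have "(LINT u:{0..t}|lborel. exp ((A - delta) * (t - u)) * c u)
      = (LINT u:{0..t}|lborel. exp (r * t) * (exp (-r * u) * c u))"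
    by (rule set_lebesgue_integral_cong) (auto simp: r_def algebra_simps simp flip: exp_add)
  also have "\<dots> = exp (r * t) * (LINT u:{0..t}|lborel. exp (-r * u) * c u)" by simp
  finally show ?thesis
    by (simp add: stX0_def r_def[symmetric] right_diff_distrib exp_minus field_simps)
qed

end

context opt begin

lemma indef_int_bound_int:
  fixes g :: "real \<Rightarrow> real"
  assumes gi: "set_integrable lborel {0..T} g" and T: "0 \<le> T"
  shows "set_integrable lborel {0..T} (\<lambda>t. C - (LINT u:{0..t}|lborel. g u))"
proof -
  have gi': "integrable lborel (\<lambda>u. indicator {0..T} u * g u)" using gi by (simp add: set_integrable_def)
  define M where "M = \<bar>C\<bar> + (\<integral>u. \<bar>indicator {0..T} u * g u\<bar> \<partial>lborel)"
  show ?thesis unfolding set_integrable_def real_scaleR_def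
  proof (rule Bochner_Integration.integrable_bound[where f="\<lambda>t. M * indicator {0..T} t"])
    show "integrable lborel (\<lambda>t. M * indicator {0..T} t)"
      by (intro integrable_mult_right integrable_real_indicator) (auto simp: emeasure_lborel_Icc_eq)
    have "(\<lambda>t. indicator {0..T} t * C - indicator {0..T} t * (LINT u:{0..t}|lborel. g u)) \<in> borel_measurable lborel"
      using meas_indef_int[OF gi] by measurable
    then show "(\<lambda>t. indicator {0..T} t * (C - (LINT u:{0..t}|lborel. g u))) \<in> borel_measurable lborel"
      by (simp add: algebra_simps)
    show "AE t in lborel. norm (indicator {0..T} t * (C - (LINT u:{0..t}|lborel. g u))) \<le> norm (M * indicator {0..T} t)"
    proof (rule AE_I2)
      fix t
      show "norm (indicator {0..T} t * (C - (LINT u:{0..t}|lborel. g u))) \<le> norm (M * indicator {0..T} t)"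
      proof (cases "t \<in> {0..T}")
        case True
        have "\<bar>LINT u:{0..t}|lborel. g u\<bar> = \<bar>\<integral>u. indicator {0..t} u * (indicator {0..T} u * g u) \<partial>lborel\<bar>"
          unfolding set_lebesgue_integral_def
          by (rule arg_cong[where f=abs], rule Bochner_Integration.integral_cong) (use True in \<open>auto simp: indicator_def\<close>)
        also have "\<dots> \<le> (\<integral>u. \<bar>indicator {0..T} u * g u\<bar> \<partial>lborel)"
        proof (rule integral_abs_bound_integral)
          show "integrable lborel (\<lambda>u. indicator {0..t} u * (indicator {0..T} u * g u))"
            using integrable_real_mult_indicator[OF _ gi', of "{0..t}"] by (simp add: mult.commute)
          show "integrable lborel (\<lambda>u. \<bar>indicator {0..T} u * g u\<bar>)" using integrable_abs[OF gi'] .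
        qed (auto simp: indicator_def abs_mult)
        finally have "\<bar>LINT u:{0..t}|lborel. g u\<bar> \<le> (\<integral>u. \<bar>indicator {0..T} u * g u\<bar> \<partial>lborel)" .
        then show ?thesis using True by (simp add: M_def)
      next
        case False then show ?thesis by simp
      qed
    qed
  qed
qed

lemma closed_loop_analysis:
  assumes cl: "closed_loop A delta rho eps eta tau gam (x0, x1) X c"
  shows "AE t in lborel. t \<ge> 0 \<longrightarrow> c t - h c t = dst t"
    and "\<And>t. t \<ge> 0 \<Longrightarrow> Gs c t = Y0 * exp ((r - a) * t)"
proof -
  have L: "L1loc c" and Xs: "\<forall>t\<ge>0. X t = state A delta eps eta tau (x0, x1) c t"
    and AE0: "AE t in lborel. t \<ge> 0 \<longrightarrow> c t = snd (X t) 0 + alpha A delta rho gam * Gfun A delta eps eta tau (X t)"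
    using cl by (auto simp: closed_loop_def)
  have AE1: "AE t in lborel. t \<ge> 0 \<longrightarrow> c t - h c t = a * Gs c t"
    using AE0 by eventually_elim (use Xs in \<open>auto simp: h_def Gs_def a_def state_def\<close>)
  define g where "g = (\<lambda>u. exp (-r * u) * (c u - h c u))"
  define W where "W = (\<lambda>t. Y0 - (LINT u:{0..t}|lborel. g u))"
  have gi: "set_integrable lborel {0..T} g" if "0 \<le> T" for T
    using g_int[OF L that] by (simp add: g_def)
  have gi': "integrable lborel (\<lambda>u. indicator {0..T} u * g u)" if "0 \<le> T" for T
    using gi[OF that] by (simp add: set_integrable_def)
  have KW: "W t = exp (-r * t) * Gs c t" if "0 \<le> t" for t
    using K[OF L that] by (simp add: W_def g_def)
  have AEg: "AE u in lborel. u \<ge> 0 \<longrightarrow> g u = a * W u"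
    using AE1 by eventually_elim (auto simp: KW g_def)
  have Wi: "set_integrable lborel {0..T} W" if "0 \<le> T" for T
    unfolding W_def by (rule indef_int_bound_int[OF gi[OF that] that])
  have Wi': "integrable lborel (\<lambda>u. indicator {0..T} u * W u)" if "0 \<le> T" for T
    using Wi[OF that] by (simp add: set_integrable_def)
  have Wid: "W t = Y0 - a * (LINT u:{0..t}|lborel. W u)" if t: "0 \<le> t" for t
  proof -
    have "(LINT u:{0..t}|lborel. g u) = (\<integral>u. indicator {0..t} u * (a * W u) \<partial>lborel)"
      unfolding set_lebesgue_integral_def real_scaleR_def
    proof (rule integral_cong_AE)
      show "(\<lambda>u. indicator {0..t} u * g u) \<in> borel_measurable lborel" using gi'[OF t] by auto
      have m[measurable]: "(\<lambda>u. indicator {0..t} u * W u) \<in> borel_measurable lborel" using Wi'[OF t] by auto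
      have "(\<lambda>u. a * (indicator {0..t} u * W u)) \<in> borel_measurable lborel" by measurable
      then show "(\<lambda>u. indicator {0..t} u * (a * W u)) \<in> borel_measurable lborel"
        by (simp add: mult.left_commute)
      show "AE u in lborel. indicator {0..t} u * g u = indicator {0..t} u * (a * W u)"
        using AEg by eventually_elim (auto simp: indicator_def)
    qed
    also have "\<dots> = (\<integral>u. a * (indicator {0..t} u * W u) \<partial>lborel)"
      by (simp add: mult.left_commute)
    also have "\<dots> = a * (LINT u:{0..t}|lborel. W u)"
      by (simp add: set_lebesgue_integral_def)
    finally show ?thesis by (simp add: W_def)
  qed
  have expint: "(LINT u:{0..t}|lborel. Y0 * exp (-a * u)) = Y0 * (1 - exp (-a * t)) / a" if "0 \<le> t" for t
  proof -
    have "(LINT u:{0..t}|lborel. Y0 * exp (-a * u)) = Y0 * (\<integral>u. indicator {0..t} u * exp ((-a) * u + 0) \<partial>lborel)"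
      by (simp add: set_lebesgue_integral_def)
    also have "(\<integral>u. indicator {0..t} u * exp ((-a) * u + 0) \<partial>lborel) = exp 0 * (exp ((-a) * t) - exp ((-a) * 0)) / (-a)"
      by (rule int_exp_affine) (use that apos in auto)
    finally show ?thesis using apos by (simp add: field_simps)
  qed
  have ei: "set_integrable lborel {0..t} (\<lambda>u. Y0 * exp (-a * u))" for t
    by (rule borel_integrable_atLeastAtMost') (intro continuous_intros)
  define D where "D = (\<lambda>t. W t - Y0 * exp (-a * t))"
  have Did: "D t = - a * (LINT u:{0..t}|lborel. D u)" if t: "0 \<le> t" for t
  proof -
    define I where "I = (LINT u:{0..t}|lborel. D u)"
    define LW where "LW = (LINT u:{0..t}|lborel. W u)"
    define LE where "LE = (LINT u:{0..t}|lborel. Y0 * exp (-a * u))"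
    have I: "I = LW - LE"
      unfolding I_def LW_def LE_def D_def by (rule set_integral_diff(2)[OF Wi[OF t] ei])
    have aLE: "a * LE = Y0 * (1 - exp (-a * t))"
      using expint[OF t] apos by (simp add: LE_def)
    have aI: "a * I = a * LW - a * LE" by (simp add: I right_diff_distrib)
    have Wt: "W t = Y0 - a * LW" using Wid[OF t] by (simp add: LW_def)
    have "D t = W t - Y0 * exp (-a * t)" by (simp add: D_def)
    also have "\<dots> = - a * I" using aI aLE Wt by (simp add: algebra_simps)
    finally show ?thesis by (simp add: I_def)
  qed
  have Di: "set_integrable lborel {0..T} D" if "0 \<le> T" for T
    unfolding D_def by (rule set_integral_diff(1)[OF Wi[OF that] ei])
  have Dabs: "set_integrable lborel {0..T} (\<lambda>u. \<bar>D u\<bar>)" if "0 \<le> T" for T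
    using set_integrable_abs[OF Di[OF that]] .
  have "AE t in lborel. t \<ge> 0 \<longrightarrow> \<bar>D t\<bar> = 0"
  proof (rule gronwall_ae[OF Dabs _ less_imp_le[OF apos]])
    show "AE t in lborel. 0 \<le> t \<longrightarrow> 0 \<le> \<bar>D t\<bar> \<and> \<bar>D t\<bar> \<le> a * (LINT u:{0..t}|lborel. \<bar>D u\<bar>)"
    proof (rule AE_I2, intro impI conjI)
      fix t :: real assume t: "0 \<le> t"
      have "\<bar>LINT u:{0..t}|lborel. D u\<bar> \<le> (LINT u:{0..t}|lborel. \<bar>D u\<bar>)"
        unfolding set_lebesgue_integral_def real_scaleR_def
        by (rule integral_abs_bound_integral)
           (use Di[OF t] Dabs[OF t] in \<open>auto simp: set_integrable_def abs_mult\<close>)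
      then show "\<bar>D t\<bar> \<le> a * (LINT u:{0..t}|lborel. \<bar>D u\<bar>)"
        using Did[OF t] apos by (simp add: abs_mult)
    qed simp
  qed
  then have AED: "AE t in lborel. t \<ge> 0 \<longrightarrow> W t = Y0 * exp (-a * t)"
    by eventually_elim (auto simp: D_def)
  have Wexp: "W t = Y0 * exp (-a * t)" if t: "0 \<le> t" for t
  proof -
    have "(LINT u:{0..t}|lborel. W u) = (LINT u:{0..t}|lborel. Y0 * exp (-a * u))"
      unfolding set_lebesgue_integral_def real_scaleR_def
    proof (rule integral_cong_AE)
      show "(\<lambda>u. indicator {0..t} u * W u) \<in> borel_measurable lborel" using Wi'[OF t] by auto
      show "(\<lambda>u. indicator {0..t} u * (Y0 * exp (-a * u))) \<in> borel_measurable lborel" by measurable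
      show "AE u in lborel. indicator {0..t} u * W u = indicator {0..t} u * (Y0 * exp (-a * u))"
        using AED by eventually_elim (auto simp: indicator_def)
    qed
    then show ?thesis using Wid[OF t] expint[OF t] apos by (simp add: field_simps)
  qed
  show G: "Gs c t = Y0 * exp ((r - a) * t)" if "t \<ge> 0" for t
  proof -
    have "exp (-r * t) * Gs c t = Y0 * exp (-a * t)" using KW[OF that] Wexp[OF that] by simp
    then have "Gs c t = exp (r * t) * (Y0 * exp (-a * t))"
      by (simp add: exp_minus field_simps)
    then show ?thesis by (simp add: algebra_simps flip: exp_add)
  qed
  show "AE t in lborel. t \<ge> 0 \<longrightarrow> c t - h c t = dst t"
    using AE1 by eventually_elim (auto simp: G dst_def)
qed

end

context opt begin

lemma dst_pos: "dst t > 0" using apos Y0p by (simp add: dst_def)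

lemma P0_nonneg: "0 \<le> t \<Longrightarrow> 0 \<le> (if s - t \<ge> -tau then x1 (s - t) else 0)" if "s \<le> 0"
  using x1nn[of "s - t"] that by auto

lemma Q_nonneg:
  assumes cnn: "AE v in lborel. v \<ge> 0 \<longrightarrow> c v \<ge> 0"
  shows "0 \<le> (LINT v:{max 0 (t - s - tau)..t}|lborel. c v * exp (eta * (v - t + s)))"
  unfolding set_lebesgue_integral_def real_scaleR_def
  by (rule integral_nonneg_AE) (use cnn in \<open>eventually_elim, auto simp: indicator_def\<close>)

lemma closed_loop_Cad:
  assumes cl: "closed_loop A delta rho eps eta tau gam (x0, x1) X c"
  shows "c \<in> Cad A delta eps eta tau (x0, x1)"
    and "AE t in lborel. t \<ge> 0 \<longrightarrow> c t \<ge> 0"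
proof -
  have L: "L1loc c" using cl by (simp add: closed_loop_def)
  note cld = closed_loop_analysis(1)[OF cl]
  note clG = closed_loop_analysis(2)[OF cl]
  define cm where "cm = (\<lambda>u. max 0 (- c u))"
  have cmi: "set_integrable lborel {0..T} cm" if T: "0 \<le> T" for T
  proof -
    have ci: "integrable lborel (\<lambda>u. indicator {0..T} u * c u)" using L1_sub[OF L T] by (simp add: set_integrable_def)
    show ?thesis unfolding set_integrable_def real_scaleR_def
    proof (rule Bochner_Integration.integrable_bound[OF ci])
      have "(\<lambda>u. max 0 (- (indicator {0..T} u * c u))) \<in> borel_measurable lborel" using ci by measurable
      also have "(\<lambda>u. max 0 (- (indicator {0..T} u * c u))) = (\<lambda>u. indicator {0..T} u * cm u)"
        by (auto simp: fun_eq_iff indicator_def cm_def)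
      finally show "(\<lambda>u. indicator {0..T} u * cm u) \<in> borel_measurable lborel" .
      show "AE x in lborel. norm (indicator {0..T} x * cm x) \<le> norm (indicator {0..T} x * c x)"
        by (rule AE_I2) (simp add: cm_def indicator_def abs_mult abs_ge_minus_self)
    qed
  qed
  have cmnn: "cm u \<ge> 0" for u by (simp add: cm_def)
  have "AE u in lborel. u \<ge> 0 \<longrightarrow> cm u = 0"
  proof (rule gronwall_ae[OF cmi _ less_imp_le[OF pos(4)]])
    show "AE u in lborel. 0 \<le> u \<longrightarrow> 0 \<le> cm u \<and> cm u \<le> eps * (LINT v:{0..u}|lborel. cm v)"
      using cld
    proof eventually_elim
      case (elim u)
      show ?case
      proof (intro impI conjI)
        assume u: "0 \<le> u"
        show "0 \<le> cm u" by (rule cmnn)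
        define w where "w = max 0 (u - 0 - tau)"
        have w: "0 \<le> w" "w \<le> u" using u pos by (auto simp: w_def)
        have cwi: "set_integrable lborel {w..u} (\<lambda>v. exp (eta * (v - u + 0)) * c v)"
          by (rule set_integrable_cont_mult[OF set_integrable_Icc_sub[OF L1_sub[OF L u]]])
             (use w in \<open>auto intro!: continuous_intros\<close>)
        have Qge: "-(LINT v:{0..u}|lborel. cm v) \<le> (LINT v:{w..u}|lborel. c v * exp (eta * (v - u + 0)))"
        proof -
          have "-(LINT v:{0..u}|lborel. cm v) = (\<integral>v. indicator {0..u} v * (- cm v) \<partial>lborel)"
            by (simp add: set_lebesgue_integral_def)
          also have "\<dots> \<le> (\<integral>v. indicator {w..u} v * (c v * exp (eta * (v - u + 0))) \<partial>lborel)"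
          proof (rule integral_mono)
            show "integrable lborel (\<lambda>v. indicator {0..u} v * - cm v)"
              using cmi[OF u] by (simp add: set_integrable_def)
            show "integrable lborel (\<lambda>v. indicator {w..u} v * (c v * exp (eta * (v - u + 0))))"
              using cwi by (simp add: set_integrable_def mult.commute)
            fix v
            show "indicator {0..u} v * - cm v \<le> indicator {w..u} v * (c v * exp (eta * (v - u + 0)))"
            proof (cases "w \<le> v \<and> v \<le> u")
              case True
              have "eta * (v - u + 0) \<le> 0" using True pos by (intro mult_nonneg_nonpos) auto
              then have e: "exp (eta * (v - u + 0)) \<le> 1" "0 < exp (eta * (v - u + 0))" by auto
              have "- cm v \<le> - cm v * exp (eta * (v - u + 0))"
                using e cmnn[of v] by (simp add: mult_left_le)
              also have "\<dots> \<le> c v * exp (eta * (v - u + 0))"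
                using e by (intro mult_right_mono) (auto simp: cm_def)
              finally show ?thesis using True w by (auto simp: indicator_def)
            next
              case False then show ?thesis using cmnn[of v] by (auto simp: indicator_def)
            qed
          qed
          finally show ?thesis by (simp add: set_lebesgue_integral_def)
        qed
        have hc: "h c u = (if 0 - u \<ge> -tau then x1 (0 - u) else 0)
            + eps * (LINT v:{w..u}|lborel. c v * exp (eta * (v - u + 0)))"
          by (simp add: h_def stX1_def w_def)
        have "0 \<le> (if 0 - u \<ge> -tau then x1 (0 - u) else 0)" using x1nn[of "0 - u"] u by auto
        moreover have "eps * (-(LINT v:{0..u}|lborel. cm v)) \<le> eps * (LINT v:{w..u}|lborel. c v * exp (eta * (v - u + 0)))"
          using Qge pos(4) by (intro mult_left_mono) auto
        ultimately have "- eps * (LINT v:{0..u}|lborel. cm v) \<le> h c u"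
          unfolding hc by simp
        moreover have "c u - h c u = dst u" using elim u by simp
        ultimately have "- c u < eps * (LINT v:{0..u}|lborel. cm v)" using dst_pos[of u] by simp
        moreover have "0 \<le> eps * (LINT v:{0..u}|lborel. cm v)"
          using pos(4) cmnn unfolding set_lebesgue_integral_def
          by (intro mult_nonneg_nonneg Bochner_Integration.integral_nonneg) (auto simp: indicator_def)
        ultimately show "cm u \<le> eps * (LINT v:{0..u}|lborel. cm v)" by (simp add: cm_def)
      qed
    qed
  qed
  then show cnn: "AE t in lborel. t \<ge> 0 \<longrightarrow> c t \<ge> 0"
    by eventually_elim (auto simp: cm_def)
  have X0nn: "0 \<le> stX0 A delta x0 c t" if t: "0 \<le> t" for t
  proof -
    define X1 where "X1 = stX1 eps eta tau x1 c t"
    have X1nn: "0 \<le> X1 s" if "s \<in> {-tau..0}" for s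
    proof -
      have "0 \<le> (if s - t \<ge> -tau then x1 (s - t) else 0)" using x1nn[of "s - t"] that t by auto
      moreover have "0 \<le> (LINT v:{max 0 (t - s - tau)..t}|lborel. c v * exp (eta * (v - t + s)))"
        by (rule Q_nonneg[OF cnn])
      ultimately show ?thesis using pos(4) by (simp add: X1_def stX1_def)
    qed
    have I: "0 \<le> (LINT s:{-tau..0}|lborel. X1 s * exp ((A - delta) * s))"
      using X1nn unfolding set_lebesgue_integral_def real_scaleR_def by (intro Bochner_Integration.integral_nonneg) (auto simp: indicator_def)
    have "Gs c t = stX0 A delta x0 c t * kappa0 A delta eps eta tau - (LINT s:{-tau..0}|lborel. X1 s * exp ((A - delta) * s))"
      by (simp add: Gs_def Gfun_def state_def X1_def kappa1_def set_lebesgue_integral_def)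
    moreover have "0 < Gs c t" using clG[OF t] Y0p by simp
    ultimately have "0 < stX0 A delta x0 c t * kappa0 A delta eps eta tau"
      using I by linarith
    then show ?thesis using kappa0_pos by (simp add: zero_less_mult_iff)
  qed
  show "c \<in> Cad A delta eps eta tau (x0, x1)"
    unfolding Cad_def
  proof (intro CollectI conjI allI impI)
    show "L1loc c" by (rule L)
    show "0 \<le> stX0 A delta (fst (x0, x1)) c t" if "0 \<le> t" for t using X0nn[OF that] by simp
    show "AE t in lborel. 0 \<le> t \<longrightarrow> 0 \<le> c t \<and> stX1 eps eta tau (snd (x0, x1)) c t 0 \<le> c t"
      using cnn cld
    proof eventually_elim
      case (elim t)
      then show ?case using dst_pos[of t] by (auto simp: h_def)
    qed
  qed
qed

end

context opt begin

lemma cad_facts: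
  assumes "c \<in> Cad A delta eps eta tau (x0, x1)"
  shows "L1loc c" "\<And>t. 0 \<le> t \<Longrightarrow> 0 \<le> stX0 A delta x0 c t"
    "AE t in lborel. t \<ge> 0 \<longrightarrow> 0 \<le> c t \<and> h c t \<le> c t"
  using assms by (auto simp: Cad_def h_def)

lemma Gs_split:
  "Gs c t = stX0 A delta x0 c t * kappa0 A delta eps eta tau
     - (LINT s:{-tau..0}|lborel. stX1 eps eta tau x1 c t s * exp (r * s))"
  by (simp add: Gs_def Gfun_def state_def kappa1_def r_def set_lebesgue_integral_def)

lemma X1_int:
  assumes L: "L1loc c" and t: "0 \<le> t"
  shows "set_integrable lborel {-tau..0} (\<lambda>s. stX1 eps eta tau x1 c t s * exp (r * s))"
proof -
  have P: "set_integrable lborel {-tau..0} (\<lambda>s. (if s - t \<ge> -tau then x1 (s - t) else 0) * exp (r * s))"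
    using P_identity(1)[OF rpos pos(6) t x1c] by simp
  have Q: "set_integrable lborel {-tau..0} (\<lambda>s. (LINT u:{max 0 (t - s - tau)..t}|lborel. c u * exp (eta * (u - t + s))) * exp (r * s))"
    using Q_identity(1)[OF rpos pos(5) pos(6) t L1_sub[OF L t]] by simp
  have "set_integrable lborel {-tau..0} (\<lambda>s. (if s - t \<ge> -tau then x1 (s - t) else 0) * exp (r * s)
     + eps * ((LINT u:{max 0 (t - s - tau)..t}|lborel. c u * exp (eta * (u - t + s))) * exp (r * s)))"
    using P Q by auto
  then show ?thesis by (simp add: stX1_def algebra_simps)
qed

definition "CC c t = (LINT u:{0..t}|lborel. exp (-r * u) * c u)"

lemma tail_bound:
  assumes cad: "c \<in> Cad A delta eps eta tau (x0, x1)" and k: "k > tau" and t: "t \<ge> k"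
  shows "(LINT u:{0..t}|lborel. exp (-r * u) * (c u - h c u)) \<le> Y0 + eps * tau * (CC c t - CC c (t - k))"
proof -
  note L = cad_facts(1)[OF cad]
  note X0nn = cad_facts(2)[OF cad]
  have cnn: "AE v in lborel. v \<ge> 0 \<longrightarrow> c v \<ge> 0" using cad_facts(3)[OF cad] by eventually_elim auto
  have t0: "0 \<le> t" "0 \<le> t - k" using t k pos by auto
  define Ct where "Ct = (LINT v:{t-k..t}|lborel. c v)"
  define I where "I = (LINT s:{-tau..0}|lborel. stX1 eps eta tau x1 c t s * exp (r * s))"
  have ci: "set_integrable lborel {t-k..t} c"
    by (rule set_integrable_Icc_sub[OF L1_sub[OF L t0(1)]]) (use t0 in auto)
  have step1: "(LINT u:{0..t}|lborel. exp (-r * u) * (c u - h c u)) \<le> Y0 + exp (-r * t) * I"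
  proof -
    have "0 \<le> stX0 A delta x0 c t * kappa0 A delta eps eta tau"
      using X0nn[OF t0(1)] kappa0_pos by simp
    then have "- I \<le> Gs c t" using Gs_split[of c t] by (simp add: I_def)
    then have "exp (-r * t) * (- I) \<le> exp (-r * t) * Gs c t" by (intro mult_left_mono) auto
    then show ?thesis using K[OF L t0(1)] by (simp add: algebra_simps)
  qed
  have X1nn: "0 \<le> stX1 eps eta tau x1 c t s" if "s \<in> {-tau..0}" for s
  proof -
    have "0 \<le> (if s - t \<ge> -tau then x1 (s - t) else 0)" using x1nn[of "s - t"] that t0 by auto
    moreover have "0 \<le> (LINT v:{max 0 (t - s - tau)..t}|lborel. c v * exp (eta * (v - t + s)))"
      by (rule Q_nonneg[OF cnn])
    ultimately show ?thesis using pos(4) by (simp add: stX1_def)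
  qed
  have X1le: "stX1 eps eta tau x1 c t s \<le> eps * Ct" if s: "s \<in> {-tau..0}" for s
  proof -
    have P0: "\<not> (s - t \<ge> -tau)" using s t k by auto
    define w where "w = max 0 (t - s - tau)"
    have w: "t - k \<le> w" "w \<le> t" using s t k by (auto simp: w_def)
    have cwi: "set_integrable lborel {w..t} (\<lambda>v. exp (eta * (v - t + s)) * c v)"
      by (rule set_integrable_cont_mult[OF set_integrable_Icc_sub[OF L1_sub[OF L t0(1)]]])
         (use w t0 in \<open>auto intro!: continuous_intros\<close>)
    have "(LINT v:{w..t}|lborel. c v * exp (eta * (v - t + s))) \<le> Ct"
      unfolding Ct_def set_lebesgue_integral_def real_scaleR_def
    proof (rule integral_mono_AE)
      show "integrable lborel (\<lambda>v. indicator {w..t} v * (c v * exp (eta * (v - t + s))))"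
        using cwi by (simp add: set_integrable_def mult.commute)
      show "integrable lborel (\<lambda>v. indicator {t-k..t} v * c v)"
        using ci by (simp add: set_integrable_def)
      show "AE v in lborel. indicator {w..t} v * (c v * exp (eta * (v - t + s))) \<le> indicator {t-k..t} v * c v"
        using cnn
      proof eventually_elim
        case (elim v)
        show ?case
        proof (cases "w \<le> v \<and> v \<le> t")
          case True
          have "eta * (v - t + s) \<le> 0" using True s pos by (intro mult_nonneg_nonpos) auto
          then have e: "exp (eta * (v - t + s)) \<le> 1" by simp
          have cv: "0 \<le> c v" using elim True w t0 by auto
          have "c v * exp (eta * (v - t + s)) \<le> c v * 1" using e cv by (intro mult_left_mono) auto
          then show ?thesis using True w by (auto simp: indicator_def)
        next
          case False
          then show ?thesis using elim t0 by (auto simp: indicator_def)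
        qed
      qed
    qed
    then show ?thesis using P0 pos(4) by (simp add: stX1_def w_def)
  qed
  have step2: "I \<le> eps * Ct * tau"
  proof -
    have "I \<le> (\<integral>s. indicator {-tau..0} s * (eps * Ct) \<partial>lborel)"
      unfolding I_def set_lebesgue_integral_def real_scaleR_def
    proof (rule integral_mono)
      show "integrable lborel (\<lambda>s. indicator {-tau..0} s * (stX1 eps eta tau x1 c t s * exp (r * s)))"
        using X1_int[OF L t0(1)] by (simp add: set_integrable_def)
      show "integrable lborel (\<lambda>s. indicator {-tau..0} s * (eps * Ct))"
      proof -
        have "integrable lborel (\<lambda>s. (eps * Ct) * indicator {-tau..0} s)"
          by (intro integrable_mult_right integrable_real_indicator) (auto simp: emeasure_lborel_Icc_eq)
        then show ?thesis by (simp add: mult.commute)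
      qed
      fix s
      show "indicator {-tau..0} s * (stX1 eps eta tau x1 c t s * exp (r * s)) \<le> indicator {-tau..0} s * (eps * Ct)"
      proof (cases "s \<in> {-tau..0}")
        case True
        have "r * s \<le> 0" using True rpos by (intro mult_nonneg_nonpos) auto
        then have "exp (r * s) \<le> 1" by simp
        then have "stX1 eps eta tau x1 c t s * exp (r * s) \<le> stX1 eps eta tau x1 c t s * 1"
          using X1nn[OF True] by (intro mult_left_mono) auto
        then show ?thesis using X1le[OF True] True by simp
      qed simp
    qed
    also have "\<dots> = eps * Ct * tau" using pos by simp
    finally show ?thesis .
  qed
  have step3: "exp (-r * t) * Ct \<le> CC c t - CC c (t - k)"
  proof -
    have eci: "set_integrable lborel {0..t} (\<lambda>u. exp (-r * u) * c u)" by (rule ec_int[OF L t0(1)])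
    have "CC c t = CC c (t - k) + (LINT u:{t-k..t}|lborel. exp (-r * u) * c u)"
    proof -
      have "{0..t} = {0..t-k} \<union> {t-k..t}" using t0 k pos by auto
      then have "CC c t = (LINT u:{0..t-k} \<union> {t-k..t}|lborel. exp (-r * u) * c u)" by (simp add: CC_def)
      also have "\<dots> = (LINT u:{0..t-k}|lborel. exp (-r * u) * c u) + (LINT u:{t-k..t}|lborel. exp (-r * u) * c u)"
      proof (rule set_integral_Un_AE)
        show "AE x in lborel. \<not> (x \<in> {0..t - k} \<and> x \<in> {t - k..t})"
          using AE_lborel_singleton[of "t - k"] by eventually_elim auto
        show "set_integrable lborel {0..t - k} (\<lambda>u. exp (- r * u) * c u)"
          by (rule set_integrable_Icc_sub[OF eci]) (use t0 k pos in auto)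
        show "set_integrable lborel {t - k..t} (\<lambda>u. exp (- r * u) * c u)"
          by (rule set_integrable_Icc_sub[OF eci]) (use t0 k pos in auto)
      qed auto
      finally show ?thesis by (simp add: CC_def)
    qed
    moreover have "exp (-r * t) * Ct \<le> (LINT u:{t-k..t}|lborel. exp (-r * u) * c u)"
    proof -
      have "exp (-r * t) * Ct = (\<integral>u. exp (-r * t) * (indicator {t-k..t} u * c u) \<partial>lborel)"
        by (simp add: Ct_def set_lebesgue_integral_def)
      also have "\<dots> = (\<integral>u. indicator {t-k..t} u * (exp (-r * t) * c u) \<partial>lborel)"
        by (simp add: mult.left_commute)
      also have "\<dots> \<le> (\<integral>u. indicator {t-k..t} u * (exp (-r * u) * c u) \<partial>lborel)"
      proof (rule integral_mono_AE)
        show "integrable lborel (\<lambda>u. indicator {t-k..t} u * (exp (-r * t) * c u))"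
        proof -
          have "integrable lborel (\<lambda>u. exp (-r * t) * (indicator {t-k..t} u * c u))"
            using ci by (simp add: set_integrable_def)
          then show ?thesis by (simp add: mult.left_commute)
        qed
        show "integrable lborel (\<lambda>u. indicator {t-k..t} u * (exp (-r * u) * c u))"
          using set_integrable_Icc_sub[OF eci, of "t-k" t] t0 by (simp add: set_integrable_def)
        show "AE u in lborel. indicator {t-k..t} u * (exp (-r * t) * c u) \<le> indicator {t-k..t} u * (exp (-r * u) * c u)"
          using cnn
        proof eventually_elim
          case (elim u)
          show ?case
          proof (cases "t - k \<le> u \<and> u \<le> t")
            case True
            have "exp (-r * t) \<le> exp (-r * u)" using True rpos by (simp add: mult_left_mono)
            moreover have "0 \<le> c u" using elim True t0 by auto
            ultimately show ?thesis using True by (simp add: mult_right_mono)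
          qed simp
        qed
      qed
      finally show ?thesis by (simp add: set_lebesgue_integral_def)
    qed
    ultimately show ?thesis by simp
  qed
  have "exp (-r * t) * I \<le> exp (-r * t) * (eps * Ct * tau)" using step2 by simp
  also have "\<dots> = eps * tau * (exp (-r * t) * Ct)" by simp
  also have "\<dots> \<le> eps * tau * (CC c t - CC c (t - k))"
    using step3 pos by (intro mult_left_mono) auto
  finally show ?thesis using step1 by simp
qed

end

context opt begin

lemma budget:
  assumes cad: "c \<in> Cad A delta eps eta tau (x0, x1)"
  shows "(\<integral>\<^sup>+t. indicator {0..} t * ennreal (exp (-r * t) * max 0 (c t - h c t)) \<partial>lborel) \<le> ennreal Y0"
proof -
  note L = cad_facts(1)[OF cad]
  note X0nn = cad_facts(2)[OF cad]
  note AEc = cad_facts(3)[OF cad]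
  have cnn: "AE v in lborel. v \<ge> 0 \<longrightarrow> c v \<ge> 0" using AEc by eventually_elim auto
  define dd where "dd = (\<lambda>t. max 0 (c t - h c t))"
  define aa where "aa = (\<lambda>j::nat. LINT u:{0..real j}|lborel. exp (-r * u) * (c u - h c u))"
  have gi: "integrable lborel (\<lambda>u. indicator {0..T} u * (exp (-r * u) * (c u - h c u)))" if "0 \<le> T" for T
    using g_int[OF L that] by (simp add: set_integrable_def)
  have nnj: "(\<integral>\<^sup>+t. indicator {0..real j} t * ennreal (exp (-r * t) * dd t) \<partial>lborel) = ennreal (aa j)" for j
  proof -
    have "(\<integral>\<^sup>+t. indicator {0..real j} t * ennreal (exp (-r * t) * dd t) \<partial>lborel)
        = (\<integral>\<^sup>+t. ennreal (indicator {0..real j} t * (exp (-r * t) * (c t - h c t))) \<partial>lborel)"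
      by (rule nn_integral_cong_AE) (use AEc in \<open>eventually_elim, auto simp: dd_def indicator_def\<close>)
    also have "\<dots> = ennreal (\<integral>t. indicator {0..real j} t * (exp (-r * t) * (c t - h c t)) \<partial>lborel)"
      by (rule nn_integral_eq_integral[OF gi[of "real j", OF of_nat_0_le_iff]]) (use AEc in \<open>eventually_elim, auto simp: indicator_def\<close>)
    finally show ?thesis by (simp add: aa_def set_lebesgue_integral_def)
  qed
  have aamono: "aa i \<le> aa j" if "i \<le> j" for i j
    unfolding aa_def set_lebesgue_integral_def real_scaleR_def
  proof (rule integral_mono_AE[OF gi gi])
    show "AE x in lborel. indicator {0..real i} x * (exp (-r * x) * (c x - h c x))
        \<le> indicator {0..real j} x * (exp (-r * x) * (c x - h c x))"
      using AEc by eventually_elim (use that in \<open>auto simp: indicator_def\<close>)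
  qed auto
  have eci: "integrable lborel (\<lambda>u. indicator {0..T} u * (exp (-r * u) * c u))" if "0 \<le> T" for T
    using ec_int[OF L that] by (simp add: set_integrable_def)
  have CCle: "CC c t \<le> x0" if "0 \<le> t" for t
  proof -
    have "0 \<le> exp (-r * t) * stX0 A delta x0 c t" using X0nn[OF that] by simp
    then show ?thesis using X0[OF L that] by (simp add: CC_def)
  qed
  have CCmono: "CC c s \<le> CC c t" if "0 \<le> s" "s \<le> t" for s t
    unfolding CC_def set_lebesgue_integral_def real_scaleR_def
  proof (rule integral_mono_AE[OF eci eci])
    show "AE x in lborel. indicator {0..s} x * (exp (-r * x) * c x) \<le> indicator {0..t} x * (exp (-r * x) * c x)"
      using cnn by eventually_elim (use that in \<open>auto simp: indicator_def\<close>)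
  qed (use that in auto)
  have inc: "incseq (\<lambda>m. CC c (real m))"
    by (rule incseq_SucI) (rule CCmono, auto)
  have bd: "\<forall>i. CC c (real i) \<le> x0" using CCle by simp
  obtain Lc where Lc: "(\<lambda>m. CC c (real m)) \<longlonglongrightarrow> Lc"
    using incseq_convergent[OF inc bd] by blast
  define K where "K = nat \<lceil>tau\<rceil> + 1"
  have Kt: "real K > tau" unfolding K_def by linarith
  have bnd: "aa (m + K) \<le> Y0 + eps * tau * (CC c (real (m + K)) - CC c (real m))" for m
    using tail_bound[OF cad Kt, of "real (m + K)"] by (simp add: aa_def)
  have lim: "(\<lambda>m. Y0 + eps * tau * (CC c (real (m + K)) - CC c (real m))) \<longlonglongrightarrow> Y0 + eps * tau * (Lc - Lc)"
  proof (intro tendsto_intros Lc)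
    show "(\<lambda>m. CC c (real (m + K))) \<longlonglongrightarrow> Lc"
      using LIMSEQ_ignore_initial_segment[OF Lc, of K] by simp
  qed
  have aale: "aa j \<le> Y0" for j
  proof -
    have "aa j \<le> Y0 + eps * tau * (Lc - Lc)"
    proof (rule LIMSEQ_le_const[OF lim])
      show "\<exists>N. \<forall>n\<ge>N. aa j \<le> Y0 + eps * tau * (CC c (real (n + K)) - CC c (real n))"
      proof (intro exI[of _ j] allI impI)
        fix n assume "j \<le> n"
        then have "aa j \<le> aa (n + K)" by (intro aamono) simp
        also have "\<dots> \<le> Y0 + eps * tau * (CC c (real (n + K)) - CC c (real n))" by (rule bnd)
        finally show "aa j \<le> Y0 + eps * tau * (CC c (real (n + K)) - CC c (real n))" .
      qed
    qed
    then show ?thesis by simp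
  qed
  define f where "f = (\<lambda>i x. indicator {0..real i} x * ennreal (exp (-r * x) * dd x))"
  have DDm: "(\<lambda>u. indicator {0..} u * dd u) \<in> borel_measurable lborel"
    using d_meas[OF L] by (simp add: dd_def)
  have fm: "f i \<in> borel_measurable lborel" for i
  proof -
    have "(\<lambda>x. ennreal (indicator {0..real i} x * exp (-r * x) * (indicator {0..} x * dd x))) \<in> borel_measurable lborel"
      using DDm by measurable
    also have "(\<lambda>x. ennreal (indicator {0..real i} x * exp (-r * x) * (indicator {0..} x * dd x))) = f i"
      by (auto simp: fun_eq_iff f_def indicator_def)
    finally show ?thesis .
  qed
  have finc: "incseq f"
    by (rule incseq_SucI) (auto simp: f_def le_fun_def indicator_def)
  have fsup: "(SUP i. f i x) = indicator {0..} x * ennreal (exp (-r * x) * dd x)" for x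
  proof (cases "x \<ge> 0")
    case True
    obtain N where N: "x \<le> real N" using real_arch_simple by blast
    show ?thesis
    proof (rule antisym)
      show "(SUP i. f i x) \<le> indicator {0..} x * ennreal (exp (-r * x) * dd x)"
        by (rule SUP_least) (auto simp: f_def indicator_def)
      have "f N x = indicator {0..} x * ennreal (exp (-r * x) * dd x)"
        using True N by (simp add: f_def indicator_def)
      then show "indicator {0..} x * ennreal (exp (-r * x) * dd x) \<le> (SUP i. f i x)"
        by (metis SUP_upper UNIV_I)
    qed
  next
    case False then show ?thesis by (simp add: f_def indicator_def)
  qed
  have "(\<integral>\<^sup>+t. indicator {0..} t * ennreal (exp (-r * t) * dd t) \<partial>lborel) = (\<integral>\<^sup>+t. (SUP i. f i t) \<partial>lborel)"
    by (simp add: fsup)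
  also have "\<dots> = (SUP i. integral\<^sup>N lborel (f i))"
    by (rule nn_integral_monotone_convergence_SUP[OF finc fm])
  also have "\<dots> = (SUP i. ennreal (aa i))" unfolding f_def nnj ..
  also have "\<dots> \<le> ennreal Y0" by (rule SUP_least) (use aale in \<open>auto intro: ennreal_leI\<close>)
  finally show ?thesis by (simp add: dd_def)
qed

end

lemma phi_neg:
  fixes p t :: real
  assumes p: "p < 1" "p \<noteq> 0" and t: "t > 0" "t \<noteq> 1"
  shows "t powr p / p - 1 / p - (t - 1) < 0"
proof -
  define phi where "phi = (\<lambda>t::real. t powr p / p - 1 / p - (t - 1))"
  have der: "DERIV phi x :> x powr (p - 1) - 1" if "x > 0" for x
    unfolding phi_def using that p
    by (auto intro!: derivative_eq_intros simp: field_simps powr_diff)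
  have phi1: "phi 1 = 0" by (simp add: phi_def)
  show ?thesis
  proof (cases "t > 1")
    case True
    obtain z where z: "1 < z" "z < t" "phi t - phi 1 = (t - 1) * (z powr (p - 1) - 1)"
      using MVT2[OF True, of phi "\<lambda>x. x powr (p - 1) - 1"] der by force
    have "z powr (p - 1) < 1 powr (p - 1)" using z p by (intro powr_less_mono2_neg) auto
    then have "(t - 1) * (z powr (p - 1) - 1) < 0" using True by (simp add: mult_pos_neg)
    then show ?thesis using z phi1 by (simp add: phi_def)
  next
    case False
    then have tl: "t < 1" using t by simp
    obtain z where z: "t < z" "z < 1" "phi 1 - phi t = (1 - t) * (z powr (p - 1) - 1)"
      using MVT2[OF tl, of phi "\<lambda>x. x powr (p - 1) - 1"] der t by force
    have "1 powr (p - 1) < z powr (p - 1)" using z p t by (intro powr_less_mono2_neg) auto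
    then have "0 < (1 - t) * (z powr (p - 1) - 1)" using tl by simp
    then show ?thesis using z phi1 by (simp add: phi_def)
  qed
qed

lemma tangent_strict:
  fixes p x y :: real
  assumes p: "p < 1" "p \<noteq> 0" and y: "y > 0" and x: "x > 0 \<or> (x = 0 \<and> p > 0)" and xy: "x \<noteq> y"
  shows "x powr p / p < y powr p / p + y powr (p - 1) * (x - y)"
proof (cases "x = 0")
  case True
  then have pp: "p > 0" using x by simp
  have "y powr (p - 1) * y = y powr p" using y by (simp add: powr_diff)
  moreover have "y powr p * (1/p - 1) > 0" using y pp p by (simp add: field_simps)
  ultimately show ?thesis using True pp by (simp add: field_simps)
next
  case False
  then have x0: "x > 0" using x by simp
  define t where "t = x / y"
  have t: "t > 0" "t \<noteq> 1" using x0 y xy by (auto simp: t_def)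
  have xt: "x = y * t" using y by (simp add: t_def)
  have "t powr p / p - 1 / p - (t - 1) < 0" by (rule phi_neg[OF p t])
  then have "y powr p * (t powr p / p - 1 / p - (t - 1)) < 0"
    using y by (simp add: mult_pos_neg)
  moreover have "y powr (p - 1) * y = y powr p" using y by (simp add: powr_diff)
  ultimately show ?thesis unfolding xt using y t
    by (simp add: powr_mult field_simps)
qed

lemma tangent:
  fixes p x y :: real
  assumes p: "p < 1" "p \<noteq> 0" and y: "y > 0" and x: "x > 0 \<or> (x = 0 \<and> p > 0)"
  shows "x powr p / p \<le> y powr p / p + y powr (p - 1) * (x - y)"
  using tangent_strict[OF p y x] by (cases "x = y") auto

lemma ae_eq_of_int_le:
  fixes F G :: "real \<Rightarrow> ennreal"
  assumes Fm: "F \<in> borel_measurable lborel" and Gm: "G \<in> borel_measurable lborel"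
    and le: "\<And>x. F x \<le> G x" and int: "integral\<^sup>N lborel G \<le> integral\<^sup>N lborel F"
    and fin: "integral\<^sup>N lborel F \<noteq> \<infinity>"
  shows "AE x in lborel. F x = G x"
proof -
  have "(\<integral>\<^sup>+x. G x - F x \<partial>lborel) = integral\<^sup>N lborel G - integral\<^sup>N lborel F"
    by (rule nn_integral_diff[OF Gm Fm fin]) (simp add: le)
  also have "\<dots> = 0" using int fin by (simp add: diff_eq_0_iff_ennreal top.not_eq_extremum order_le_less_trans)
  finally have "AE x in lborel. G x - F x = 0"
    using nn_integral_0_iff_AE[of "\<lambda>x. G x - F x"] Gm Fm by auto
  moreover have "AE x in lborel. F x \<noteq> \<infinity>" by (rule nn_integral_PInf_AE[OF Fm fin])
  ultimately show ?thesis
    by eventually_elim (metis ennreal_minus_eq_0 le antisym)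
qed

lemma nn_exp_int:
  fixes C k :: real
  assumes C: "C \<ge> 0" and k: "k > 0"
  shows "(\<integral>\<^sup>+t. indicator {0..} t * ennreal (C * exp (-k * t)) \<partial>lborel) = ennreal (C / k)"
proof -
  have eq: "(\<lambda>t. indicator {0..} t * ennreal (C * exp (-k * t))) = (\<lambda>t. ennreal (indicator {0..} t * (C * exp (-k * t))))"
    by (auto simp: fun_eq_iff indicator_def)
  have hi: "((\<lambda>x. exp (-k * x)) has_integral exp (-k * 0) / k) {0..}"
    by (rule has_integral_exp_minus_to_infinity[OF k])
  then have "((\<lambda>x. C * exp (-k * x)) has_integral C * (exp (-k * 0) / k)) {0..}"
    by (rule has_integral_mult_right)
  then have "((\<lambda>x. if x \<in> {0..} then C * exp (-k * x) else 0) has_integral C / k) UNIV"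
    unfolding has_integral_restrict_UNIV by simp
  moreover have "(\<lambda>x. if x \<in> {0..} then C * exp (-k * x) else 0) = (\<lambda>t. indicator {0..} t * (C * exp (-k * t)))"
    by (auto simp: fun_eq_iff indicator_def)
  ultimately have hi2: "((\<lambda>t. indicator {0..} t * (C * exp (-k * t))) has_integral C / k) UNIV" by simp
  have "integral\<^sup>N lborel (\<lambda>t. ennreal (indicator {0..} t * (C * exp (-k * t)))) = ennreal (C / k)"
    by (rule nn_integral_has_integral_lborel[OF _ _ hi2]) (use C in \<open>auto simp: indicator_def\<close>)
  then show ?thesis unfolding eq .
qed

context opt begin

definition "p = 1 - gam"
definition "Kc = (a * Y0) powr (- gam)"
definition "dd c t = max 0 (c t - h c t)"

lemma p_props: "p < 1" "p \<noteq> 0" using pos by (auto simp: p_def)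
lemma Kc_pos: "Kc > 0" using apos Y0p by (simp add: Kc_def)

lemma a_gam: "gam * a = rho - r * (1 - gam)"
  using pos by (simp add: a_def alpha_def r_def)

lemma f2: "dst t powr (p - 1) * exp (-rho * t) = Kc * exp (-r * t)"
proof -
  have "dst t powr (p - 1) = (a * Y0) powr (- gam) * exp ((r - a) * t * (- gam))"
    using apos Y0p by (simp add: dst_def p_def powr_mult exp_powr_real)
  moreover have "(r - a) * t * (- gam) + (-rho * t) = -r * t"
    using a_gam by (simp add: algebra_simps) (metis (no_types) distrib_left mult.commute mult.left_commute mult_minus_left)
  ultimately show ?thesis
    by (simp add: Kc_def mult.assoc flip: exp_add)
qed

lemma f3: "dst t powr p * exp (-rho * t) = (a * Y0) powr p * exp (-a * t)"
proof -
  have "dst t powr p = (a * Y0) powr p * exp ((r - a) * t * p)"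
    using apos Y0p by (simp add: dst_def powr_mult exp_powr_real)
  moreover have "(r - a) * t * p + (-rho * t) = -a * t"
  proof -
    have "(r - a) * p = rho - a" using a_gam by (simp add: p_def algebra_simps)
    then show ?thesis by (simp add: algebra_simps) (metis mult.commute ring_class.ring_distribs(1) add.commute)
  qed
  ultimately show ?thesis by (simp add: mult.assoc flip: exp_add)
qed

lemma f4: "Kc * exp (-r * t) * dst t = (Kc * a * Y0) * exp (-a * t)"
  by (simp add: dst_def algebra_simps flip: exp_add)

lemma budget_int: "(\<integral>\<^sup>+t. indicator {0..} t * ennreal (Kc * exp (-r * t) * dst t) \<partial>lborel) = ennreal (Kc * Y0)"
  unfolding f4 using nn_exp_int[of "Kc * a * Y0" a] Kc_pos apos Y0p by simp

end

context opt begin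

lemma DD_meas: "L1loc c \<Longrightarrow> (\<lambda>t. indicator {0..} t * dd c t) \<in> borel_measurable lborel"
  using d_meas by (simp add: dd_def)

lemma dd_nn: "dd c t \<ge> 0" by (simp add: dd_def)

lemma key_ineq:
  assumes D: "D \<ge> 0" "D > 0 \<or> p > 0" and t: "t \<ge> 0"
  shows "D powr p / p * exp (-rho * t) + Kc * exp (-r * t) * dst t
      \<le> dst t powr p / p * exp (-rho * t) + Kc * exp (-r * t) * D"
    and "D \<noteq> dst t \<Longrightarrow> D powr p / p * exp (-rho * t) + Kc * exp (-r * t) * dst t
      < dst t powr p / p * exp (-rho * t) + Kc * exp (-r * t) * D"
proof -
  have x: "D > 0 \<or> (D = 0 \<and> p > 0)" using D by auto
  have e: "exp (-rho * t) > 0" by simp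
  have eq: "dst t powr p / p * exp (-rho * t) + dst t powr (p - 1) * (D - dst t) * exp (-rho * t)
     + Kc * exp (-r * t) * dst t = dst t powr p / p * exp (-rho * t) + Kc * exp (-r * t) * D"
  proof -
    have "dst t powr (p - 1) * (D - dst t) * exp (-rho * t) = (dst t powr (p - 1) * exp (-rho * t)) * (D - dst t)"
      by simp
    also have "\<dots> = Kc * exp (-r * t) * (D - dst t)" by (simp only: f2)
    finally show ?thesis by (simp add: algebra_simps)
  qed
  have "D powr p / p * exp (-rho * t) \<le> (dst t powr p / p + dst t powr (p - 1) * (D - dst t)) * exp (-rho * t)"
    using tangent[OF p_props dst_pos x] e by (intro mult_right_mono) auto
  then show "D powr p / p * exp (-rho * t) + Kc * exp (-r * t) * dst t
      \<le> dst t powr p / p * exp (-rho * t) + Kc * exp (-r * t) * D"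
    using eq by (simp add: algebra_simps)
  assume ne: "D \<noteq> dst t"
  have "D powr p / p * exp (-rho * t) < (dst t powr p / p + dst t powr (p - 1) * (D - dst t)) * exp (-rho * t)"
    using tangent_strict[OF p_props dst_pos x ne] e by (intro mult_strict_right_mono) auto
  then show "D powr p / p * exp (-rho * t) + Kc * exp (-r * t) * dst t
      < dst t powr p / p * exp (-rho * t) + Kc * exp (-r * t) * D"
    using eq by (simp add: algebra_simps)
qed

lemma Bpart:
  assumes cad: "c \<in> Cad A delta eps eta tau (x0, x1)"
  shows "(\<integral>\<^sup>+t. indicator {0..} t * ennreal (Kc * exp (-r * t) * dd c t) \<partial>lborel) \<le> ennreal (Kc * Y0)"
proof -
  have L: "L1loc c" using cad_facts(1)[OF cad] .
  note DDm[measurable] = DD_meas[OF L]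
  have "(\<integral>\<^sup>+t. indicator {0..} t * ennreal (Kc * exp (-r * t) * dd c t) \<partial>lborel)
     = (\<integral>\<^sup>+t. ennreal Kc * (indicator {0..} t * ennreal (exp (-r * t) * dd c t)) \<partial>lborel)"
  proof (intro nn_integral_cong)
    fix t
    have "ennreal (Kc * exp (-r * t) * dd c t) = ennreal Kc * ennreal (exp (-r * t) * dd c t)"
      using Kc_pos dd_nn[of c t] by (simp add: ennreal_mult mult.assoc)
    then show "indicator {0..} t * ennreal (Kc * exp (-r * t) * dd c t) = ennreal Kc * (indicator {0..} t * ennreal (exp (-r * t) * dd c t))"
      by (simp add: mult.left_commute)
  qed
  also have "\<dots> = ennreal Kc * (\<integral>\<^sup>+t. indicator {0..} t * ennreal (exp (-r * t) * dd c t) \<partial>lborel)"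
  proof (rule nn_integral_cmult)
    have "(\<lambda>t. ennreal (exp (-r * t) * (indicator {0..} t * dd c t))) \<in> borel_measurable lborel" by measurable
    also have "(\<lambda>t. ennreal (exp (-r * t) * (indicator {0..} t * dd c t))) = (\<lambda>t. indicator {0..} t * ennreal (exp (-r * t) * dd c t))"
      by (auto simp: fun_eq_iff indicator_def)
    finally show "(\<lambda>t. indicator {0..} t * ennreal (exp (-r * t) * dd c t)) \<in> borel_measurable lborel" .
  qed
  also have "\<dots> \<le> ennreal Kc * ennreal Y0"
    using budget[OF cad] by (intro mult_left_mono) (auto simp: dd_def)
  also have "\<dots> = ennreal (Kc * Y0)" using Kc_pos Y0p by (simp add: ennreal_mult)
  finally show ?thesis .
qed

end

context opt begin

definition "N1 c = (\<integral>\<^sup>+t. indicator {0..} t * ennreal (dd c t powr p / p * exp (-rho * t)) \<partial>lborel)"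
definition "V1 = (a * Y0) powr p / p / a"
definition "N2 c = (\<integral>\<^sup>+t. indicator {0..} t * (if dd c t = 0 then \<infinity> else ennreal (dd c t powr p / (gam - 1) * exp (-rho * t))) \<partial>lborel)"
definition "V2 = (a * Y0) powr p / (gam - 1) / a"

lemma Bf_int: "(\<integral>\<^sup>+t. indicator {0..} t * ennreal (Kc * exp (-r * t) * dst t) \<partial>lborel) = ennreal (Kc * Y0)"
  by (rule budget_int)

lemma Bf_meas: "(\<lambda>t. indicator {0..} t * ennreal (Kc * exp (-r * t) * dst t)) \<in> borel_measurable lborel"
proof -
  have "(\<lambda>t. ennreal (indicator {0..} t * (Kc * exp (-r * t) * dst t))) \<in> borel_measurable lborel"
    unfolding dst_def by measurable
  also have "(\<lambda>t. ennreal (indicator {0..} t * (Kc * exp (-r * t) * dst t))) = (\<lambda>t. indicator {0..} t * ennreal (Kc * exp (-r * t) * dst t))"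
    by (auto simp: fun_eq_iff indicator_def)
  finally show ?thesis .
qed

lemma B'f_meas: "L1loc c \<Longrightarrow> (\<lambda>t. indicator {0..} t * ennreal (Kc * exp (-r * t) * dd c t)) \<in> borel_measurable lborel"
proof -
  assume L: "L1loc c"
  note DDm[measurable] = DD_meas[OF L]
  have "(\<lambda>t. ennreal (Kc * exp (-r * t) * (indicator {0..} t * dd c t))) \<in> borel_measurable lborel" by measurable
  also have "(\<lambda>t. ennreal (Kc * exp (-r * t) * (indicator {0..} t * dd c t))) = (\<lambda>t. indicator {0..} t * ennreal (Kc * exp (-r * t) * dd c t))"
    by (auto simp: fun_eq_iff indicator_def)
  finally show ?thesis .
qed

lemma cmp_lt1:
  assumes g: "gam < 1" and cad: "c \<in> Cad A delta eps eta tau (x0, x1)"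
  shows "N1 c \<le> ennreal V1" and "N1 c = ennreal V1 \<Longrightarrow> AE t in lborel. t \<ge> 0 \<longrightarrow> dd c t = dst t"
proof -
  have pp: "p > 0" using g by (simp add: p_def)
  have L: "L1loc c" using cad_facts(1)[OF cad] .
  note DDm[measurable] = DD_meas[OF L]
  define Af where "Af = (\<lambda>t. indicator {0..} t * ennreal (dd c t powr p / p * exp (-rho * t)))"
  define Bf where "Bf = (\<lambda>t. indicator {0..} t * ennreal (Kc * exp (-r * t) * dst t))"
  define A'f where "A'f = (\<lambda>t. indicator {0..} t * ennreal (dst t powr p / p * exp (-rho * t)))"
  define B'f where "B'f = (\<lambda>t. indicator {0..} t * ennreal (Kc * exp (-r * t) * dd c t))"
  have Afm: "Af \<in> borel_measurable lborel"
  proof -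
    have "(\<lambda>t. ennreal ((indicator {0..} t * dd c t) powr p / p * exp (-rho * t))) \<in> borel_measurable lborel"
      by measurable
    also have "(\<lambda>t. ennreal ((indicator {0..} t * dd c t) powr p / p * exp (-rho * t))) = Af"
      by (auto simp: fun_eq_iff indicator_def Af_def)
    finally show ?thesis .
  qed
  have Bfm: "Bf \<in> borel_measurable lborel" using Bf_meas by (simp add: Bf_def)
  have A'fm: "A'f \<in> borel_measurable lborel"
  proof -
    have "(\<lambda>t. ennreal (indicator {0..} t * (dst t powr p / p * exp (-rho * t)))) \<in> borel_measurable lborel"
      unfolding dst_def by measurable
    also have "(\<lambda>t. ennreal (indicator {0..} t * (dst t powr p / p * exp (-rho * t)))) = A'f"
      by (auto simp: fun_eq_iff indicator_def A'f_def)
    finally show ?thesis .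
  qed
  have B'fm: "B'f \<in> borel_measurable lborel" using B'f_meas[OF L] by (simp add: B'f_def)
  define F where "F = (\<lambda>t. Af t + Bf t)"
  define G where "G = (\<lambda>t. A'f t + B'f t)"
  have Fm: "F \<in> borel_measurable lborel" using Afm Bfm by (simp add: F_def)
  have Gm: "G \<in> borel_measurable lborel" using A'fm B'fm by (simp add: G_def)
  have nn1: "0 \<le> dd c t powr p / p * exp (-rho * t)" for t using pp by simp
  have nn2: "0 \<le> Kc * exp (-r * t) * dst t" for t using Kc_pos dst_pos[of t] by simp
  have nn3: "0 \<le> dst t powr p / p * exp (-rho * t)" for t using pp by simp
  have nn4: "0 \<le> Kc * exp (-r * t) * dd c t" for t using Kc_pos dd_nn[of c t] by simp
  have Fe: "F t = indicator {0..} t * ennreal (dd c t powr p / p * exp (-rho * t) + Kc * exp (-r * t) * dst t)" for t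
    using nn1[of t] nn2[of t] by (auto simp: F_def Af_def Bf_def indicator_def)
  have Ge: "G t = indicator {0..} t * ennreal (dst t powr p / p * exp (-rho * t) + Kc * exp (-r * t) * dd c t)" for t
    using nn3[of t] nn4[of t] by (auto simp: G_def A'f_def B'f_def indicator_def)
  have FG: "F t \<le> G t" for t
    unfolding Fe Ge using key_ineq(1)[OF dd_nn, of c t] pp
    by (cases "t \<ge> 0") (auto simp: indicator_def intro!: ennreal_leI)
  have intF: "integral\<^sup>N lborel F = N1 c + ennreal (Kc * Y0)"
    unfolding F_def using nn_integral_add[OF Afm Bfm] Bf_int by (simp add: N1_def Af_def Bf_def)
  have intA': "integral\<^sup>N lborel A'f = ennreal V1"
  proof -
    have pw: "dst t powr p / p * exp (-rho * t) = (a * Y0) powr p / p * exp (-a * t)" for t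
      using f3[of t] by (simp add: field_simps)
    have "A'f = (\<lambda>t. indicator {0..} t * ennreal ((a * Y0) powr p / p * exp (-a * t)))"
      unfolding A'f_def pw ..
    then show ?thesis using nn_exp_int[of "(a * Y0) powr p / p" a] pp apos by (simp add: V1_def)
  qed
  have intB': "integral\<^sup>N lborel B'f \<le> ennreal (Kc * Y0)"
    using Bpart[OF cad] by (simp add: B'f_def)
  have intG: "integral\<^sup>N lborel G \<le> ennreal V1 + ennreal (Kc * Y0)"
    unfolding G_def using nn_integral_add[OF A'fm B'fm] intA' intB' by (simp add: add_left_mono)
  have FGi: "integral\<^sup>N lborel F \<le> integral\<^sup>N lborel G" by (intro nn_integral_mono FG)
  have "N1 c + ennreal (Kc * Y0) \<le> ennreal V1 + ennreal (Kc * Y0)"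
    using order_trans[OF FGi[unfolded intF] intG] .
  then have "ennreal (Kc * Y0) + N1 c \<le> ennreal (Kc * Y0) + ennreal V1" by (simp add: add.commute)
  then show "N1 c \<le> ennreal V1" unfolding ennreal_add_left_cancel_le by simp
  assume eq: "N1 c = ennreal V1"
  have "AE t in lborel. F t = G t"
  proof (rule ae_eq_of_int_le[OF Fm Gm FG])
    show "integral\<^sup>N lborel G \<le> integral\<^sup>N lborel F" using intF intG eq by simp
    show "integral\<^sup>N lborel F \<noteq> \<infinity>" using intF eq by simp
  qed
  then show "AE t in lborel. t \<ge> 0 \<longrightarrow> dd c t = dst t"
  proof eventually_elim
    case (elim t)
    show ?case
    proof
      assume t: "t \<ge> 0"
      have "dd c t powr p / p * exp (-rho * t) + Kc * exp (-r * t) * dst t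
          = dst t powr p / p * exp (-rho * t) + Kc * exp (-r * t) * dd c t"
        using elim t unfolding Fe Ge using nn1[of t] nn2[of t] nn3[of t] nn4[of t] by (simp del: ennreal_plus add: ennreal_inj)
      then show "dd c t = dst t" using key_ineq(2)[OF dd_nn _ t, of c] pp by force
    qed
  qed
qed

lemma cmp_gt1:
  assumes g: "gam > 1" and cad: "c \<in> Cad A delta eps eta tau (x0, x1)"
  shows "ennreal V2 \<le> N2 c" and "N2 c = ennreal V2 \<Longrightarrow> AE t in lborel. t \<ge> 0 \<longrightarrow> dd c t = dst t"
proof -
  have pn: "p < 0" using g by (simp add: p_def)
  have g1: "gam - 1 > 0" using g by simp
  have divp: "x / p = - (x / (gam - 1))" for x by (simp add: p_def divide_minus_right[symmetric])
  have L: "L1loc c" using cad_facts(1)[OF cad] .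
  note DDm[measurable] = DD_meas[OF L]
  define Wf where "Wf = (\<lambda>t. indicator {0..} t * (if dd c t = 0 then \<infinity> else ennreal (dd c t powr p / (gam - 1) * exp (-rho * t))))"
  define Bf where "Bf = (\<lambda>t. indicator {0..} t * ennreal (Kc * exp (-r * t) * dst t))"
  define A'f where "A'f = (\<lambda>t. indicator {0..} t * ennreal (dst t powr p / (gam - 1) * exp (-rho * t)))"
  define B'f where "B'f = (\<lambda>t. indicator {0..} t * ennreal (Kc * exp (-r * t) * dd c t))"
  have Wfm: "Wf \<in> borel_measurable lborel"
  proof -
    have "(\<lambda>t. if 0 \<le> t then (if indicator {0..} t * dd c t = 0 then \<infinity>
        else ennreal ((indicator {0..} t * dd c t) powr p / (gam - 1) * exp (-rho * t))) else 0) \<in> borel_measurable lborel"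
      by measurable
    also have "(\<lambda>t. if 0 \<le> t then (if indicator {0..} t * dd c t = 0 then \<infinity>
        else ennreal ((indicator {0..} t * dd c t) powr p / (gam - 1) * exp (-rho * t))) else 0) = Wf"
      by (auto simp: fun_eq_iff indicator_def Wf_def)
    finally show ?thesis .
  qed
  have Bfm: "Bf \<in> borel_measurable lborel" using Bf_meas by (simp add: Bf_def)
  have A'fm: "A'f \<in> borel_measurable lborel"
  proof -
    have "(\<lambda>t. ennreal (indicator {0..} t * (dst t powr p / (gam - 1) * exp (-rho * t)))) \<in> borel_measurable lborel"
      unfolding dst_def by measurable
    also have "(\<lambda>t. ennreal (indicator {0..} t * (dst t powr p / (gam - 1) * exp (-rho * t)))) = A'f"
      by (auto simp: fun_eq_iff indicator_def A'f_def)
    finally show ?thesis .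
  qed
  have B'fm: "B'f \<in> borel_measurable lborel" using B'f_meas[OF L] by (simp add: B'f_def)
  define F where "F = (\<lambda>t. A'f t + Bf t)"
  define G where "G = (\<lambda>t. Wf t + B'f t)"
  have Fm: "F \<in> borel_measurable lborel" using A'fm Bfm by (simp add: F_def)
  have Gm: "G \<in> borel_measurable lborel" using Wfm B'fm by (simp add: G_def)
  have nn2: "0 \<le> Kc * exp (-r * t) * dst t" for t using Kc_pos dst_pos[of t] by simp
  have nn3: "0 \<le> dst t powr p / (gam - 1) * exp (-rho * t)" for t using g1 by simp
  have nn4: "0 \<le> Kc * exp (-r * t) * dd c t" for t using Kc_pos dd_nn[of c t] by simp
  have nn5: "0 \<le> dd c t powr p / (gam - 1) * exp (-rho * t)" for t using g1 by simp
  have Fe: "F t = indicator {0..} t * ennreal (dst t powr p / (gam - 1) * exp (-rho * t) + Kc * exp (-r * t) * dst t)" for t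
    using nn3[of t] nn2[of t] by (auto simp: F_def A'f_def Bf_def indicator_def)
  have Ge: "t \<ge> 0 \<Longrightarrow> dd c t \<noteq> 0 \<Longrightarrow> G t = ennreal (dd c t powr p / (gam - 1) * exp (-rho * t) + Kc * exp (-r * t) * dd c t)" for t
    using nn5[of t] nn4[of t] by (auto simp: G_def Wf_def B'f_def indicator_def)
  have Ginf: "t \<ge> 0 \<Longrightarrow> dd c t = 0 \<Longrightarrow> G t = \<infinity>" for t by (simp add: G_def Wf_def)
  have real_ineq: "dst t powr p / (gam - 1) * exp (-rho * t) + Kc * exp (-r * t) * dst t
      \<le> dd c t powr p / (gam - 1) * exp (-rho * t) + Kc * exp (-r * t) * dd c t"
    if "t \<ge> 0" "dd c t > 0" for t
    using key_ineq(1)[of "dd c t" t] that dd_nn[of c t] unfolding divp by (simp add: algebra_simps)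
  have real_strict: "dst t powr p / (gam - 1) * exp (-rho * t) + Kc * exp (-r * t) * dst t
      < dd c t powr p / (gam - 1) * exp (-rho * t) + Kc * exp (-r * t) * dd c t"
    if "t \<ge> 0" "dd c t > 0" "dd c t \<noteq> dst t" for t
    using key_ineq(2)[of "dd c t" t] that dd_nn[of c t] unfolding divp by (simp add: algebra_simps)
  have FG: "F t \<le> G t" for t
  proof (cases "t \<ge> 0")
    case True
    show ?thesis
    proof (cases "dd c t = 0")
      case True2: True then show ?thesis using Ginf[OF True] by simp
    next
      case False
      then have "dd c t > 0" using dd_nn[of c t] by simp
      then show ?thesis unfolding Fe Ge[OF True False] using True real_ineq[of t]
        by (auto simp: indicator_def intro!: ennreal_leI)
    qed
  next
    case False then show ?thesis by (simp add: F_def A'f_def Bf_def indicator_def)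
  qed
  have intF: "integral\<^sup>N lborel F = ennreal V2 + ennreal (Kc * Y0)"
  proof -
    have pw: "dst t powr p / (gam - 1) * exp (-rho * t) = (a * Y0) powr p / (gam - 1) * exp (-a * t)" for t
      using f3[of t] by (simp add: field_simps)
    have "A'f = (\<lambda>t. indicator {0..} t * ennreal ((a * Y0) powr p / (gam - 1) * exp (-a * t)))"
      unfolding A'f_def pw ..
    then have "integral\<^sup>N lborel A'f = ennreal V2"
      using nn_exp_int[of "(a * Y0) powr p / (gam - 1)" a] g1 apos by (simp add: V2_def)
    then show ?thesis unfolding F_def using nn_integral_add[OF A'fm Bfm] Bf_int by (simp add: Bf_def)
  qed
  have intB': "integral\<^sup>N lborel B'f \<le> ennreal (Kc * Y0)"
    using Bpart[OF cad] by (simp add: B'f_def)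
  have intG: "integral\<^sup>N lborel G \<le> N2 c + ennreal (Kc * Y0)"
    unfolding G_def using nn_integral_add[OF Wfm B'fm] intB' by (simp add: add_left_mono N2_def Wf_def)
  have FGi: "integral\<^sup>N lborel F \<le> integral\<^sup>N lborel G" by (intro nn_integral_mono FG)
  have "ennreal V2 + ennreal (Kc * Y0) \<le> N2 c + ennreal (Kc * Y0)"
    using order_trans[OF FGi[unfolded intF] intG] .
  then have "ennreal (Kc * Y0) + ennreal V2 \<le> ennreal (Kc * Y0) + N2 c" by (simp add: add.commute)
  then show "ennreal V2 \<le> N2 c" unfolding ennreal_add_left_cancel_le by simp
  assume eq: "N2 c = ennreal V2"
  have "AE t in lborel. F t = G t"
  proof (rule ae_eq_of_int_le[OF Fm Gm FG])
    show "integral\<^sup>N lborel G \<le> integral\<^sup>N lborel F" using intF intG eq by simp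
    show "integral\<^sup>N lborel F \<noteq> \<infinity>" using intF by simp
  qed
  then show "AE t in lborel. t \<ge> 0 \<longrightarrow> dd c t = dst t"
  proof eventually_elim
    case (elim t)
    show ?case
    proof
      assume t: "t \<ge> 0"
      have ne: "dd c t \<noteq> 0"
      proof
        assume "dd c t = 0"
        then have "G t = \<infinity>" using Ginf t by simp
        moreover have "F t \<noteq> \<infinity>" unfolding Fe using t by (simp add: indicator_def)
        ultimately show False using elim by simp
      qed
      then have dpos: "dd c t > 0" using dd_nn[of c t] by simp
      have "dst t powr p / (gam - 1) * exp (-rho * t) + Kc * exp (-r * t) * dst t
          = dd c t powr p / (gam - 1) * exp (-rho * t) + Kc * exp (-r * t) * dd c t"
        using elim t unfolding Fe Ge[OF t ne] using nn5[of t] nn2[of t] nn3[of t] nn4[of t] by (simp del: ennreal_plus add: ennreal_inj)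
      then show "dd c t = dst t" using real_strict[OF t dpos] by force
    qed
  qed
qed

end

lemma W12_cont:
  assumes "W12 tau x1" "tau > 0"
  shows "continuous_on {-tau..0} x1"
proof -
  obtain g where gm: "g \<in> borel_measurable lborel" and gi: "set_integrable lborel {-tau..0} g"
    and rep: "\<forall>s\<in>{-tau..0}. x1 s = x1 (-tau) + (LINT u:{-tau..s}|lborel. g u)"
    using assms(1) unfolding W12_def by blast
  have gh: "g integrable_on {-tau..0}" using set_borel_integral_eq_integral(1)[OF gi] .
  have c: "continuous_on {-tau..0} (\<lambda>s. x1 (-tau) + integral {-tau..s} g)"
    by (intro continuous_intros indefinite_integral_continuous_1 gh)
  show ?thesis
  proof (rule continuous_on_eq[OF c])
    fix s assume s: "s \<in> {-tau..0}"
    have "set_integrable lborel {-tau..s} g"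
      by (rule set_integrable_subset[OF gi]) (use s in auto)
    then have "(LINT u:{-tau..s}|lborel. g u) = integral {-tau..s} g"
      by (rule set_borel_integral_eq_integral(2))
    moreover have "x1 s = x1 (-tau) + (LINT u:{-tau..s}|lborel. g u)" using rep s by blast
    ultimately show "x1 (-tau) + integral {-tau..s} g = x1 s" by linarith
  qed
qed

context opt begin

lemma unique_control:
  assumes L: "L1loc c" and L': "L1loc c'"
    and ae: "AE t in lborel. t \<ge> 0 \<longrightarrow> c t - h c t = c' t - h c' t"
  shows "AE t in lborel. t \<ge> 0 \<longrightarrow> c' t = c t"
proof -
  define e where "e = (\<lambda>u. c' u - c u)"
  have ei: "set_integrable lborel {0..T} e" if "0 \<le> T" for T
    unfolding e_def by (rule set_integral_diff(1)[OF L1_sub[OF L' that] L1_sub[OF L that]])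
  have eai: "set_integrable lborel {0..T} (\<lambda>u. \<bar>e u\<bar>)" if "0 \<le> T" for T
    using set_integrable_abs[OF ei[OF that]] .
  have "AE t in lborel. t \<ge> 0 \<longrightarrow> \<bar>e t\<bar> = 0"
  proof (rule gronwall_ae[OF eai _ less_imp_le[OF pos(4)]])
    show "AE t in lborel. 0 \<le> t \<longrightarrow> 0 \<le> \<bar>e t\<bar> \<and> \<bar>e t\<bar> \<le> eps * (LINT u:{0..t}|lborel. \<bar>e u\<bar>)"
      using ae
    proof eventually_elim
      case (elim t)
      show ?case
      proof (intro impI conjI)
        assume t: "0 \<le> t"
        show "0 \<le> \<bar>e t\<bar>" by simp
        define w where "w = max 0 (t - 0 - tau)"
        have w: "0 \<le> w" "w \<le> t" using t pos by (auto simp: w_def)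
        define E where "E = (\<lambda>v. exp (eta * (v - t + 0)))"
        have wi: "set_integrable lborel {w..t} (\<lambda>v. E v * f v)" if "set_integrable lborel {0..t} f" for f
          unfolding E_def
          by (rule set_integrable_cont_mult[OF set_integrable_Icc_sub[OF that]])
             (use w in \<open>auto intro!: continuous_intros\<close>)
        have hdiff: "h c' t - h c t = eps * ((LINT v:{w..t}|lborel. c' v * E v) - (LINT v:{w..t}|lborel. c v * E v))"
          by (simp add: h_def stX1_def w_def E_def algebra_simps)
        have "(LINT v:{w..t}|lborel. c' v * E v) - (LINT v:{w..t}|lborel. c v * E v)
            = (LINT v:{w..t}|lborel. c' v * E v - c v * E v)"
          using wi[OF L1_sub[OF L' t]] wi[OF L1_sub[OF L t]] by (simp add: set_integral_diff mult.commute)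
        also have "\<dots> = (\<integral>v. indicator {w..t} v * (e v * E v) \<partial>lborel)"
          by (simp add: set_lebesgue_integral_def e_def algebra_simps)
        finally have qd: "(LINT v:{w..t}|lborel. c' v * E v) - (LINT v:{w..t}|lborel. c v * E v)
            = (\<integral>v. indicator {w..t} v * (e v * E v) \<partial>lborel)" .
        have "\<bar>\<integral>v. indicator {w..t} v * (e v * E v) \<partial>lborel\<bar> \<le> (\<integral>v. indicator {0..t} v * \<bar>e v\<bar> \<partial>lborel)"
        proof (rule integral_abs_bound_integral)
          show "integrable lborel (\<lambda>v. indicator {w..t} v * (e v * E v))"
            using wi[OF ei[OF t]] by (simp add: set_integrable_def mult.commute)
          show "integrable lborel (\<lambda>v. indicator {0..t} v * \<bar>e v\<bar>)"
            using eai[OF t] by (simp add: set_integrable_def)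
          fix v
          show "\<bar>indicator {w..t} v * (e v * E v)\<bar> \<le> indicator {0..t} v * \<bar>e v\<bar>"
          proof (cases "w \<le> v \<and> v \<le> t")
            case True
            have "eta * (v - t + 0) \<le> 0" using True pos by (intro mult_nonneg_nonpos) auto
            then have "E v \<le> 1" "0 < E v" by (auto simp: E_def)
            then have "\<bar>e v * E v\<bar> \<le> \<bar>e v\<bar>" by (simp add: abs_mult mult_left_le)
            then show ?thesis using True w by (auto simp: indicator_def)
          qed (auto simp: indicator_def)
        qed
        moreover have "e t = h c' t - h c t" using elim t by (simp add: e_def)
        ultimately show "\<bar>e t\<bar> \<le> eps * (LINT u:{0..t}|lborel. \<bar>e u\<bar>)"
          using hdiff qd pos(4) by (simp add: abs_mult set_lebesgue_integral_def)
      qed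
    qed
  qed
  then show ?thesis by eventually_elim (simp add: e_def)
qed

end

context opt begin

lemma J0_eq: "J0 A delta rho eps eta tau gam (x0, x1) c = (if gam < 1 then enn2ereal (N1 c) else - enn2ereal (N2 c))"
  unfolding J0_def N1_def N2_def dd_def h_def p_def Let_def snd_conv by (rule refl)

lemma cl_dd:
  assumes cl: "closed_loop A delta rho eps eta tau gam (x0, x1) X c"
  shows "AE t in lborel. t \<ge> 0 \<longrightarrow> dd c t = dst t"
  using closed_loop_analysis(1)[OF cl]
proof eventually_elim
  case (elim t) then show ?case using dst_pos[of t] by (auto simp: dd_def)
qed

lemma closed_loop_values:
  assumes cl: "closed_loop A delta rho eps eta tau gam (x0, x1) X c"
  shows "gam < 1 \<Longrightarrow> N1 c = ennreal V1" and "gam > 1 \<Longrightarrow> N2 c = ennreal V2"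
proof -
  note AEd = cl_dd[OF cl]
  assume g: "gam < 1"
  have pp: "p > 0" using g by (simp add: p_def)
  have pw: "dst t powr p / p * exp (-rho * t) = (a * Y0) powr p / p * exp (-a * t)" for t
    using f3[of t] by (simp add: field_simps)
  have "N1 c = (\<integral>\<^sup>+t. indicator {0..} t * ennreal (dst t powr p / p * exp (-rho * t)) \<partial>lborel)"
    unfolding N1_def by (rule nn_integral_cong_AE) (use AEd in \<open>eventually_elim, auto simp: indicator_def\<close>)
  also have "\<dots> = (\<integral>\<^sup>+t. indicator {0..} t * ennreal ((a * Y0) powr p / p * exp (-a * t)) \<partial>lborel)"
    unfolding pw ..
  also have "\<dots> = ennreal V1"
    using nn_exp_int[of "(a * Y0) powr p / p" a] pp apos by (simp add: V1_def)
  finally show "N1 c = ennreal V1" .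
next
  note AEd = cl_dd[OF cl]
  assume g: "gam > 1"
  have g1: "gam - 1 > 0" using g by simp
  have pw: "dst t powr p / (gam - 1) * exp (-rho * t) = (a * Y0) powr p / (gam - 1) * exp (-a * t)" for t
    using f3[of t] by (simp add: field_simps)
  have "N2 c = (\<integral>\<^sup>+t. indicator {0..} t * ennreal (dst t powr p / (gam - 1) * exp (-rho * t)) \<partial>lborel)"
    unfolding N2_def
  proof (rule nn_integral_cong_AE)
    show "AE t in lborel. indicator {0..} t * (if dd c t = 0 then \<infinity> else ennreal (dd c t powr p / (gam - 1) * exp (- rho * t)))
        = indicator {0..} t * ennreal (dst t powr p / (gam - 1) * exp (- rho * t))"
      using AEd
    proof eventually_elim
      case (elim t) then show ?case using dst_pos[of t] by (auto simp: indicator_def)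
    qed
  qed
  also have "\<dots> = (\<integral>\<^sup>+t. indicator {0..} t * ennreal ((a * Y0) powr p / (gam - 1) * exp (-a * t)) \<partial>lborel)"
    unfolding pw ..
  also have "\<dots> = ennreal V2"
    using nn_exp_int[of "(a * Y0) powr p / (gam - 1)" a] g1 apos by (simp add: V2_def)
  finally show "N2 c = ennreal V2" .
qed

lemma nuY: "nu A delta rho gam * Y0 powr (1 - gam) = (a * Y0) powr p / p / a"
proof -
  have "(a * Y0) powr p / a = a powr (p - 1) * Y0 powr p"
    using apos Y0p by (simp add: powr_mult powr_diff)
  moreover have "p - 1 = - gam" by (simp add: p_def)
  ultimately have e: "(a * Y0) powr p / a = a powr (- gam) * Y0 powr p" by simp
  have "(a * Y0) powr p / p / a = ((a * Y0) powr p / a) / p" by simp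
  also have "\<dots> = a powr (- gam) * Y0 powr p / p" unfolding e ..
  also have "\<dots> = nu A delta rho gam * Y0 powr (1 - gam)"
    by (simp add: nu_def a_def[symmetric] p_def)
  finally show ?thesis by simp
qed

lemma V1_eq: "V1 = nu A delta rho gam * Y0 powr (1 - gam)" by (simp add: nuY V1_def)
lemma V2_eq: "- V2 = nu A delta rho gam * Y0 powr (1 - gam)"
proof -
  have g: "gam - 1 = - p" by (simp add: p_def)
  have "V2 = - ((a * Y0) powr p / p / a)" unfolding V2_def g by simp
  then show ?thesis by (simp add: nuY)
qed

theorem main_opt:
  assumes cl: "closed_loop A delta rho eps eta tau gam (x0, x1) X c"
  shows "c \<in> Cad A delta eps eta tau (x0, x1)
    \<and> J0 A delta rho eps eta tau gam (x0, x1) c = V0 A delta rho eps eta tau gam (x0, x1)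
    \<and> V0 A delta rho eps eta tau gam (x0, x1) = ereal (nu A delta rho gam * Y0 powr (1 - gam))
    \<and> (\<forall>c'\<in>Cad A delta eps eta tau (x0, x1).
         J0 A delta rho eps eta tau gam (x0, x1) c' = V0 A delta rho eps eta tau gam (x0, x1)
         \<longrightarrow> (AE t in lborel. t \<ge> 0 \<longrightarrow> c' t = c t))"
proof -
  let ?J = "J0 A delta rho eps eta tau gam (x0, x1)"
  let ?C = "Cad A delta eps eta tau (x0, x1)"
  have cad: "c \<in> ?C" by (rule closed_loop_Cad(1)[OF cl])
  have Jc: "?J c = ereal (nu A delta rho gam * Y0 powr (1 - gam))"
  proof (cases "gam < 1")
    case True
    have "0 \<le> V1" using True apos Y0p by (simp add: V1_def p_def)
    then show ?thesis using closed_loop_values(1)[OF cl True] V1_eq J0_eq True by simp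
  next
    case False
    then have g: "gam > 1" using pos by simp
    have "0 \<le> V2" using g apos Y0p by (simp add: V2_def)
    then show ?thesis using closed_loop_values(2)[OF cl g] V2_eq J0_eq False by simp
  qed
  have ub: "?J c' \<le> ?J c" if c': "c' \<in> ?C" for c'
  proof (cases "gam < 1")
    case True
    have "N1 c' \<le> N1 c" using cmp_lt1(1)[OF True c'] closed_loop_values(1)[OF cl True] by simp
    then show ?thesis using True J0_eq by (simp add: less_eq_ennreal.rep_eq[symmetric])
  next
    case False
    then have g: "gam > 1" using pos by simp
    have "N2 c \<le> N2 c'" using cmp_gt1(1)[OF g c'] closed_loop_values(2)[OF cl g] by simp
    then have "enn2ereal (N2 c) \<le> enn2ereal (N2 c')" by (simp add: less_eq_ennreal.rep_eq[symmetric])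
    then show ?thesis using False J0_eq by simp
  qed
  have V: "V0 A delta rho eps eta tau gam (x0, x1) = ?J c"
    unfolding V0_def
  proof (rule antisym)
    show "Sup (?J ` ?C) \<le> ?J c" by (rule Sup_least) (use ub in auto)
    show "?J c \<le> Sup (?J ` ?C)" by (rule Sup_upper) (use cad in auto)
  qed
  have uniq: "AE t in lborel. t \<ge> 0 \<longrightarrow> c' t = c t"
    if c': "c' \<in> ?C" and eq: "?J c' = V0 A delta rho eps eta tau gam (x0, x1)" for c'
  proof -
    have eqJ: "?J c' = ?J c" using eq V by simp
    have AEd': "AE t in lborel. t \<ge> 0 \<longrightarrow> dd c' t = dst t"
    proof (cases "gam < 1")
      case True
      have "enn2ereal (N1 c') = enn2ereal (N1 c)" using eqJ True J0_eq by simp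
      then have "N1 c' = ennreal V1" using closed_loop_values(1)[OF cl True] by (simp add: enn2ereal_inject)
      then show ?thesis by (rule cmp_lt1(2)[OF True c'])
    next
      case False
      then have g: "gam > 1" using pos by simp
      have "enn2ereal (N2 c') = enn2ereal (N2 c)" using eqJ False J0_eq by simp
      then have "N2 c' = ennreal V2" using closed_loop_values(2)[OF cl g] by (simp add: enn2ereal_inject)
      then show ?thesis by (rule cmp_gt1(2)[OF g c'])
    qed
    have "AE t in lborel. t \<ge> 0 \<longrightarrow> c t - h c t = c' t - h c' t"
      using AEd' closed_loop_analysis(1)[OF cl] cad_facts(3)[OF c']
      by eventually_elim (auto simp: dd_def)
    then show ?thesis
      by (rule unique_control[OF cad_facts(1)[OF cad] cad_facts(1)[OF c']])
  qed
  show ?thesis using cad Jc V uniq by simp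
qed

end

theorem mainTheorem10:
  fixes A delta rho eps eta tau gam :: real
    and q :: "real \<times> (real \<Rightarrow> real)"
    and X :: "real \<Rightarrow> real \<times> (real \<Rightarrow> real)"
    and c :: "real \<Rightarrow> real"
  assumes "A > 0" "delta > 0" "rho > 0" "eps > 0" "eta > 0" "tau > 0" "gam > 0" "gam \<noteq> 1"
    and "lambda0 eps eta tau < eps - eta" "eps - eta \<le> 0" "0 < A - delta"
    and "rho > (A - delta) * (1 - gam)"
    and "q \<in> Iset A delta eps eta tau"
    and "closed_loop A delta rho eps eta tau gam q X c"
  shows "c \<in> Cad A delta eps eta tau q
    \<and> J0 A delta rho eps eta tau gam q c = V0 A delta rho eps eta tau gam q
    \<and> V0 A delta rho eps eta tau gam q
        = ereal (nu A delta rho gam * Gfun A delta eps eta tau q powr (1 - gam))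
    \<and> (\<forall>c'\<in>Cad A delta eps eta tau q.
         J0 A delta rho eps eta tau gam q c' = V0 A delta rho eps eta tau gam q
         \<longrightarrow> (AE t in lborel. t \<ge> 0 \<longrightarrow> c' t = c t))"
proof -
  obtain x0 x1 where q: "q = (x0, x1)" by (cases q)
  have I: "Gfun A delta eps eta tau (x0, x1) > 0" "W12 tau x1" "x1 (-tau) = 0" "\<forall>s\<in>{-tau<..0}. x1 s > 0"
    using assms(13) by (auto simp: Iset_def q)
  have x1nn: "x1 s \<ge> 0" if "s \<in> {-tau..0}" for s
  proof (cases "s = -tau")
    case True then show ?thesis using I(3) by simp
  next
    case False then show ?thesis using I(4) that by (auto intro: less_imp_le)
  qed
  interpret opt A delta rho eps eta tau gam x0 x1
  proof
    show "continuous_on {-tau..0} x1" by (rule W12_cont[OF I(2) assms(6)])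
    show "\<And>s. s \<in> {-tau..0} \<Longrightarrow> x1 s \<ge> 0" by (rule x1nn)
  qed (use assms I in auto)
  have cl: "closed_loop A delta rho eps eta tau gam (x0, x1) X c" using assms(14) q by simp
  show ?thesis using main_opt[OF cl] q by (simp add: Y0_def)
qed

end
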